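(* In the setting described in the context, let $J\in\mathcal{A}(\Gamma)$ and $p\in\{0,\dots,r\}$, and assume that $u(\beta_k)=\pm\alpha_p$ for some $k\in[q]$. Let $\vec H$ be the oriented hyperplane $H_{\alpha_p,\,c}$ with $c:=\mathrm{sgn}(u^{-1}(\alpha_p))\,m_k$, whose positive side is $\{\nu:\langle\nu,\alpha_p^\vee\rangle>c\}$ and negative side $\{\nu:\langle\nu,\alpha_p^\vee\rangle<c\}$. Then: (1) $u^{-1}(\alpha_p)>0$ if and only if the alcove $A^J_{\overline t}$ lies on the positive side of $\vec H$; (2) $w^{-1}(\alpha_p)<0$ if and only if the alcove $A^J_q$ lies on the positive side of $\vec H$.
   Context: $\Phi$ is an irreducible (finite, crystallographic) root system with positive roots $\Phi^+$, simple roots $\alpha_1,\dots,\alpha_r$, Weyl group $W$, length $\ell$, inner product $\langle\cdot,\cdot\rangle$ on the real span $V$, coroots $\alpha^\vee=2\alpha/\langle\alpha,\alpha\rangle$, $\mathrm{ht}(\alpha^\vee)$ the sum of coefficients in the simple coroots; $\alpha_0:=-\widetilde\alpha$ with $\widetilde\alpha$ the highest root; $\mathrm{sgn}(\alpha)=\pm1$ for positive/negative roots. $\mathrm{QB}(W)$ has edges $w\xrightarrow{\alpha}ws_\alpha$ ($\alpha\in\Phi^+$) when $\ell(ws_\alpha)=\ell(w)+1$ or $\ell(ws_\alpha)=\ell(w)-2\mathrm{ht}(\alpha^\vee)+1$. $H_{\alpha,k}=\{\nu:\langle\nu,\alpha^\vee\rangle=k\}$, $s_{\alpha,k}$ the affine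 reflection in it. Alcoves are the components of $V\setminus\bigcup H_{\alpha,k}$, $A_\circ=\{\nu:0<\langle\nu,\alpha^\vee\rangle<1\ \forall\alpha>0\}$, $A_{-\lambda}=A_\circ-\lambda$; $A\xrightarrow{\beta}B$ for adjacent alcoves with common wall in some $H_{\beta,k}$ and $\beta$ pointing from $A$ to $B$. For dominant $\lambda$, a $\lambda$-chain is a sequence of roots $(\beta_i)$ indexed by a totally ordered set such that $A_\circ\to\cdots\to A_{-\lambda}$, with steps labeled $-\beta_i$, is a minimal length alcove path. Setting: $I=\{\overline1<\cdots<\overline t<1<\cdots<q<\overline{t+1}<\cdots<\overline n\}$, $\Gamma=(\beta_i)_{i\in I}$ a $\lambda$-chain with $\{\beta_1,\dots,\beta_q\}$ exactly the positive roots (without repetition) of a rank 2 root subsystem. $r_i=s_{\beta_i}$, $l_i=|\{j<i:\beta_j=\beta_i\}|$, $\widehat r_i=s_{\beta_i,-l_i}$. A subset $J=\{j_1<\cdots<j_s\}\subseteq I$ is admissible if $1\xrightarrow{\beta_{j_1}}r_{j_1}\to\cdots\xrightarrow{\beta_{j_s}}r_{j_1}\cdots r_{j_s}$ is a path in $\mathrm{QB}(W)$; $\mathcal{A}(\Gamma)$ is the set of admissible subsets. For $J$ let $u$ and $\widehat u$ be the products $r_{j}$, resp. $\widehat r_j$, over $j\in J\cap\{\overline1,\dots,\overline t\}$ in increasing order, and $w$, $\widehat w$ the analogous products over $j\in J\cap(\{\overline1,\dots,\overline t\}\cup[q])$. Define $m_i$ for $i\in[q]$ by $\widehat u(H_{\beta_i,-l_i})=H_{u(\beta_i),m_i}$.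 Let $A^\emptyset_i$ ($i\in I$) be the alcove reached after step $i$ of the alcove path of $\Gamma$ (with $A^\emptyset_{\overline 0}:=A_\circ$ before the first step), and let the gallery of $J$ have alcoves $A^J_i:=\widehat r_{j_1}\cdots\widehat r_{j_p}(A^\emptyset_i)$, where $j_1<\cdots<j_p$ are the elements of $J$ that are $\le i$ (equivalently, the gallery obtained from the unfolded one by successively folding along the faces at positions $j_s,\dots,j_1$). In particular $A^J_{\overline t}=\widehat u(A^\emptyset_{\overline t})$ and $A^J_q=\widehat w(A^\emptyset_q)$. *)

theory Defs
  imports "HOL-Analysis.Analysis"
begin

definition coroot :: "'a::euclidean_space \<Rightarrow> 'a" where
  "coroot \<alpha> = (2 / (\<alpha> \<bullet> \<alpha>)) *\<^sub>R \<alpha>"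

definition pairing :: "'a::euclidean_space \<Rightarrow> 'a \<Rightarrow> real" where
  "pairing \<nu> \<alpha> = \<nu> \<bullet> coroot \<alpha>"

definition refl :: "'a::euclidean_space \<Rightarrow> 'a \<Rightarrow> 'a" where
  "refl \<alpha> \<nu> = \<nu> - pairing \<nu> \<alpha> *\<^sub>R \<alpha>"

definition aff_refl :: "'a::euclidean_space \<Rightarrow> real \<Rightarrow> 'a \<Rightarrow> 'a" where
  "aff_refl \<alpha> k \<nu> = \<nu> - (pairing \<nu> \<alpha> - k) *\<^sub>R \<alpha>"

definition hyp :: "'a::euclidean_space \<Rightarrow> real \<Rightarrow> 'a set" where
  "hyp \<alpha> k = {\<nu>. pairing \<nu> \<alpha> = k}"

definition root_system :: "'a::euclidean_space set \<Rightarrow> bool" where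
  "root_system R \<longleftrightarrow> finite R \<and> 0 \<notin> R \<and> span R = UNIV \<and>
     (\<forall>\<alpha>\<in>R. \<forall>\<beta>\<in>R. refl \<alpha> \<beta> \<in> R) \<and>
     (\<forall>\<alpha>\<in>R. \<forall>\<beta>\<in>R. pairing \<beta> \<alpha> \<in> \<int>) \<and>
     (\<forall>\<alpha>\<in>R. \<forall>c. c *\<^sub>R \<alpha> \<in> R \<longrightarrow> c = 1 \<or> c = -1)"

definition irreducible_rs :: "'a::euclidean_space set \<Rightarrow> bool" where
  "irreducible_rs R \<longleftrightarrow> R \<noteq> {} \<and>
     \<not> (\<exists>R1 R2. R1 \<noteq> {} \<and> R2 \<noteq> {} \<and> R1 \<union> R2 = R \<and> (\<forall>x\<in>R1. \<forall>y\<in>R2. x \<bullet> y = 0))"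

definition is_base :: "'a::euclidean_space set \<Rightarrow> 'a set \<Rightarrow> bool" where
  "is_base R S \<longleftrightarrow> S \<subseteq> R \<and> independent S \<and>
     (\<forall>\<beta>\<in>R. \<exists>c. (\<forall>\<alpha>\<in>S. c \<alpha> \<in> \<int>) \<and>
        ((\<forall>\<alpha>\<in>S. c \<alpha> \<ge> 0) \<or> (\<forall>\<alpha>\<in>S. c \<alpha> \<le> 0)) \<and>
        \<beta> = (\<Sum>\<alpha>\<in>S. c \<alpha> *\<^sub>R \<alpha>))"

definition nonneg_comb :: "'a::euclidean_space set \<Rightarrow> 'a \<Rightarrow> bool" where
  "nonneg_comb S v \<longleftrightarrow> (\<exists>c. (\<forall>\<alpha>\<in>S. c \<alpha> \<ge> 0) \<and> v = (\<Sum>\<alpha>\<in>S. c \<alpha> *\<^sub>R \<alpha>))"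

definition pos_roots :: "'a::euclidean_space set \<Rightarrow> 'a set \<Rightarrow> 'a set" where
  "pos_roots R S = {\<beta>\<in>R. nonneg_comb S \<beta>}"

definition sgn_root :: "'a::euclidean_space set \<Rightarrow> 'a set \<Rightarrow> 'a \<Rightarrow> real" where
  "sgn_root R S \<beta> = (if \<beta> \<in> pos_roots R S then 1 else -1)"

definition highest_root :: "'a::euclidean_space set \<Rightarrow> 'a set \<Rightarrow> 'a" where
  "highest_root R S = (THE \<theta>. \<theta> \<in> R \<and> (\<forall>\<beta>\<in>R. nonneg_comb S (\<theta> - \<beta>)))"

definition coroot_height :: "'a::euclidean_space set \<Rightarrow> 'a \<Rightarrow> real" where
  "coroot_height S \<alpha> =
     (\<Sum>a\<in>S. (THE c. (\<forall>x. x \<notin> S \<longrightarrow> c x = 0) \<and>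
                     coroot \<alpha> = (\<Sum>b\<in>S. c b *\<^sub>R coroot b)) a)"

definition refl_prod :: "'a::euclidean_space list \<Rightarrow> 'a \<Rightarrow> 'a" where
  "refl_prod xs = foldr (\<lambda>\<alpha> f. refl \<alpha> \<circ> f) xs id"

definition weyl_length :: "'a::euclidean_space set \<Rightarrow> ('a \<Rightarrow> 'a) \<Rightarrow> nat" where
  "weyl_length S w = (LEAST n. \<exists>xs. set xs \<subseteq> S \<and> length xs = n \<and> w = refl_prod xs)"

definition qb_edge :: "'a::euclidean_space set \<Rightarrow> 'a set \<Rightarrow> ('a \<Rightarrow> 'a) \<Rightarrow> 'a \<Rightarrow> ('a \<Rightarrow> 'a) \<Rightarrow> bool" where
  "qb_edge R S w \<alpha> w' \<longleftrightarrow> \<alpha> \<in> pos_roots R S \<and> w' = w \<circ> refl \<alpha> \<and>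
     (weyl_length S w' = weyl_length S w + 1 \<or>
      real (weyl_length S w') = real (weyl_length S w) - 2 * coroot_height S \<alpha> + 1)"

definition walls :: "'a::euclidean_space set \<Rightarrow> 'a set" where
  "walls R = (\<Union>\<alpha>\<in>R. \<Union>k::int. hyp \<alpha> (of_int k))"

definition is_alcove :: "'a::euclidean_space set \<Rightarrow> 'a set \<Rightarrow> bool" where
  "is_alcove R A \<longleftrightarrow> A \<in> components (UNIV - walls R)"

definition fund_alcove :: "'a::euclidean_space set \<Rightarrow> 'a set \<Rightarrow> 'a set" where
  "fund_alcove R S = {\<nu>. \<forall>\<alpha>\<in>pos_roots R S. 0 < pairing \<nu> \<alpha> \<and> pairing \<nu> \<alpha> < 1}"

definition alcove_edge :: "'a::euclidean_space set \<Rightarrow> 'a set \<Rightarrow> 'a \<Rightarrow> 'a set \<Rightarrow> bool" where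
  "alcove_edge R A \<beta> B \<longleftrightarrow> is_alcove R A \<and> is_alcove R B \<and> \<beta> \<in> R \<and>
     (\<exists>k::int. B = aff_refl \<beta> (of_int k) ` A \<and>
        aff_dim (closure A \<inter> hyp \<beta> (of_int k)) = int DIM('a) - 1 \<and>
        (\<forall>\<nu>\<in>A. pairing \<nu> \<beta> < of_int k))"

definition alcove_path :: "'a::euclidean_space set \<Rightarrow> 'a set list \<Rightarrow> bool" where
  "alcove_path R As \<longleftrightarrow> (\<forall>i. Suc i < length As \<longrightarrow> (\<exists>\<beta>. alcove_edge R (As ! i) \<beta> (As ! Suc i)))"

(* alcoves of the path of Gamma: chain_alcoves .. 0 = A_circ, chain_alcoves .. (Suc i) = alcove after
   the step at list position i (labelled -Gamma!i) *)
primrec chain_alcoves :: "'a::euclidean_space set \<Rightarrow> 'a set \<Rightarrow> 'a list \<Rightarrow> nat \<Rightarrow> 'a set" where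
  "chain_alcoves R S \<Gamma> 0 = fund_alcove R S"
| "chain_alcoves R S \<Gamma> (Suc i) = (THE B. alcove_edge R (chain_alcoves R S \<Gamma> i) (- (\<Gamma> ! i)) B)"

definition dominant :: "'a::euclidean_space set \<Rightarrow> 'a set \<Rightarrow> 'a \<Rightarrow> bool" where
  "dominant R S lam \<longleftrightarrow> (\<forall>\<alpha>\<in>R. pairing lam \<alpha> \<in> \<int>) \<and> (\<forall>\<alpha>\<in>pos_roots R S. pairing lam \<alpha> \<ge> 0)"

definition lambda_chain :: "'a::euclidean_space set \<Rightarrow> 'a set \<Rightarrow> 'a \<Rightarrow> 'a list \<Rightarrow> bool" where
  "lambda_chain R S lam \<Gamma> \<longleftrightarrow>
     (\<forall>i<length \<Gamma>. \<Gamma> ! i \<in> R \<and>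
        alcove_edge R (chain_alcoves R S \<Gamma> i) (- (\<Gamma> ! i)) (chain_alcoves R S \<Gamma> (Suc i))) \<and>
     chain_alcoves R S \<Gamma> (length \<Gamma>) = (\<lambda>\<nu>. \<nu> - lam) ` fund_alcove R S \<and>
     (\<forall>As. As \<noteq> [] \<and> alcove_path R As \<and> hd As = fund_alcove R S \<and>
           last As = (\<lambda>\<nu>. \<nu> - lam) ` fund_alcove R S \<longrightarrow> length \<Gamma> \<le> length As - 1)"

definition root_subsystem :: "'a::euclidean_space set \<Rightarrow> 'a set \<Rightarrow> bool" where
  "root_subsystem R R' \<longleftrightarrow> R' \<subseteq> R \<and> R' \<noteq> {} \<and> (\<forall>\<alpha>\<in>R'. \<forall>\<beta>\<in>R'. refl \<alpha> \<beta> \<in> R')"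

definition lcount :: "'a list \<Rightarrow> nat \<Rightarrow> nat" where
  "lcount \<Gamma> i = card {j. j < i \<and> \<Gamma> ! j = \<Gamma> ! i}"

definition r_at :: "'a::euclidean_space list \<Rightarrow> nat \<Rightarrow> 'a \<Rightarrow> 'a" where
  "r_at \<Gamma> i = refl (\<Gamma> ! i)"

definition rhat_at :: "'a::euclidean_space list \<Rightarrow> nat \<Rightarrow> 'a \<Rightarrow> 'a" where
  "rhat_at \<Gamma> i = aff_refl (\<Gamma> ! i) (- real (lcount \<Gamma> i))"

definition prodJ :: "(nat \<Rightarrow> 'b \<Rightarrow> 'b) \<Rightarrow> nat set \<Rightarrow> 'b \<Rightarrow> 'b" where
  "prodJ f J = foldl (\<lambda>acc j. acc \<circ> f j) id (sorted_list_of_set J)"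

definition admissible :: "'a::euclidean_space set \<Rightarrow> 'a set \<Rightarrow> 'a list \<Rightarrow> nat set \<Rightarrow> bool" where
  "admissible R S \<Gamma> J \<longleftrightarrow> J \<subseteq> {..<length \<Gamma>} \<and>
     (let js = sorted_list_of_set J in
      \<forall>k<length js. qb_edge R S (foldl (\<lambda>acc j. acc \<circ> r_at \<Gamma> j) id (take k js)) (\<Gamma> ! (js ! k))
                              (foldl (\<lambda>acc j. acc \<circ> r_at \<Gamma> j) id (take (Suc k) js)))"

definition galleryJ :: "'a::euclidean_space set \<Rightarrow> 'a set \<Rightarrow> 'a list \<Rightarrow> nat set \<Rightarrow> nat \<Rightarrow> 'a set" where
  "galleryJ R S \<Gamma> J n = prodJ (rhat_at \<Gamma>) (J \<inter> {..<n}) ` chain_alcoves R S \<Gamma> n"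

end

theory Submission
  imports Defs
begin


lemma coroot_inner: "\<alpha> \<noteq> 0 \<Longrightarrow> \<alpha> \<bullet> coroot \<alpha> = 2"
  by (simp add: coroot_def inner_commute)

lemma pairing_self: "\<alpha> \<noteq> 0 \<Longrightarrow> pairing \<alpha> \<alpha> = 2"
  by (simp add: pairing_def coroot_inner)

lemma coroot_neg[simp]: "coroot (- \<alpha>) = - coroot \<alpha>"
  by (simp add: coroot_def)

lemma pairing_neg2[simp]: "pairing \<nu> (- \<alpha>) = - pairing \<nu> \<alpha>"
  by (simp add: pairing_def)

lemma pairing_add1: "pairing (x + y) \<alpha> = pairing x \<alpha> + pairing y \<alpha>"
  by (simp add: pairing_def inner_add_left)
lemma pairing_diff1: "pairing (x - y) \<alpha> = pairing x \<alpha> - pairing y \<alpha>"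
  by (simp add: pairing_def inner_diff_left)
lemma pairing_scale1: "pairing (c *\<^sub>R x) \<alpha> = c * pairing x \<alpha>"
  by (simp add: pairing_def)
lemma pairing_neg1[simp]: "pairing (- x) \<alpha> = - pairing x \<alpha>"
  by (simp add: pairing_def)
lemma pairing_zero1[simp]: "pairing 0 \<alpha> = 0"
  by (simp add: pairing_def)

lemma aff_refl_neg: "aff_refl (- \<beta>) k = aff_refl \<beta> (- k)"
  by (rule ext) (simp add: aff_refl_def algebra_simps)

lemma aff_refl_eq: "aff_refl \<beta> k x = refl \<beta> x + k *\<^sub>R \<beta>"
  by (simp add: aff_refl_def refl_def algebra_simps)

lemma pairing_aff_refl_self: "\<beta> \<noteq> 0 \<Longrightarrow> pairing (aff_refl \<beta> k x) \<beta> = 2 * k - pairing x \<beta>"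
  by (simp add: aff_refl_def pairing_def inner_diff_left coroot_inner algebra_simps)

lemma aff_refl_invol: "\<beta> \<noteq> 0 \<Longrightarrow> aff_refl \<beta> k (aff_refl \<beta> k x) = x"
proof -
  assume b: "\<beta> \<noteq> 0"
  have "aff_refl \<beta> k (aff_refl \<beta> k x) = aff_refl \<beta> k x - (2 * k - pairing x \<beta> - k) *\<^sub>R \<beta>"
    using b by (simp add: aff_refl_def[of \<beta> k "aff_refl \<beta> k x"] pairing_aff_refl_self)
  also have "\<dots> = x" by (simp add: aff_refl_def algebra_simps)
  finally show ?thesis .
qed

lemma aff_refl_fix: "pairing x \<beta> = k \<Longrightarrow> aff_refl \<beta> k x = x"
  by (simp add: aff_refl_def)

definition ortho :: "('a::euclidean_space \<Rightarrow> 'a) \<Rightarrow> bool" where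
  "ortho L \<longleftrightarrow> linear L \<and> (\<forall>x y. L x \<bullet> L y = x \<bullet> y)"

lemma ortho_id: "ortho id" by (simp add: ortho_def linear_iff)

lemma ortho_comp: "ortho L \<Longrightarrow> ortho M \<Longrightarrow> ortho (L \<circ> M)"
  by (simp add: ortho_def linear_compose)

lemma linear_refl: "linear (refl \<alpha>)"
  unfolding linear_iff refl_def pairing_def by (simp add: inner_add_left algebra_simps)

lemma ortho_refl: "\<alpha> \<noteq> 0 \<Longrightarrow> ortho (refl \<alpha>)"
  unfolding ortho_def
  by (auto simp: linear_refl refl_def pairing_def coroot_def inner_diff_left inner_diff_right
      inner_commute algebra_simps dot_square_norm power2_eq_square)

lemma ortho_inj: "ortho L \<Longrightarrow> inj L"
proof (rule injI)
  fix x y assume o: "ortho L" and e: "L x = L y"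
  have l: "linear L" using o by (simp add: ortho_def)
  have "L (x - y) = 0" using e by (simp add: linear_diff[OF l])
  then have "(x - y) \<bullet> (x - y) = 0" using o unfolding ortho_def by (metis inner_zero_left)
  then show "x = y" by simp
qed

lemma ortho_surj: "ortho L \<Longrightarrow> surj L"
  using linear_injective_imp_surjective ortho_inj ortho_def by blast

lemma ortho_bij: "ortho L \<Longrightarrow> bij L"
  by (simp add: bij_def ortho_inj ortho_surj)

lemma ortho_coroot: "ortho L \<Longrightarrow> coroot (L \<alpha>) = L (coroot \<alpha>)"
  by (simp add: ortho_def coroot_def linear_cmul)

lemma ortho_pairing: "ortho L \<Longrightarrow> pairing (L x) (L \<alpha>) = pairing x \<alpha>"
  by (simp add: pairing_def ortho_coroot) (simp add: ortho_def)

lemma ortho_neg: "ortho L \<Longrightarrow> L (- x) = - L x"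
  by (simp add: ortho_def linear_neg)

lemma ortho_add: "ortho L \<Longrightarrow> L (x + y) = L x + L y"
  by (simp add: ortho_def linear_add)
lemma ortho_diff: "ortho L \<Longrightarrow> L (x - y) = L x - L y"
  by (simp add: ortho_def linear_diff)
lemma ortho_scale: "ortho L \<Longrightarrow> L (c *\<^sub>R x) = c *\<^sub>R L x"
  by (simp add: ortho_def linear_scale)
lemma ortho_zero: "ortho L \<Longrightarrow> L 0 = 0"
  by (simp add: ortho_def linear_0)

lemma refl_invol: "\<alpha> \<noteq> 0 \<Longrightarrow> refl \<alpha> (refl \<alpha> x) = x"
  using aff_refl_invol[of \<alpha> 0 x] by (simp add: aff_refl_eq)

lemma refl_self: "\<alpha> \<noteq> 0 \<Longrightarrow> refl \<alpha> \<alpha> = - \<alpha>"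
  by (simp add: refl_def pairing_self algebra_simps scaleR_2)

lemma pairing_refl: "\<alpha> \<noteq> 0 \<Longrightarrow> pairing (refl \<alpha> x) \<beta> = pairing x (refl \<alpha> \<beta>)"
proof -
  assume a: "\<alpha> \<noteq> 0"
  have "pairing (refl \<alpha> x) \<beta> = pairing (refl \<alpha> x) (refl \<alpha> (refl \<alpha> \<beta>))"
    using a by (simp add: refl_invol)
  also have "\<dots> = pairing x (refl \<alpha> \<beta>)" using ortho_pairing[OF ortho_refl[OF a]] by simp
  finally show ?thesis .
qed


lemma aff_pairing:
  assumes "ortho L" "\<And>x. F x = L x + b"
  shows "pairing (F x) (L \<delta>) = pairing x \<delta> + pairing b (L \<delta>)"
  using assms by (simp add: pairing_add1 ortho_pairing)

lemma aff_conj: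
  assumes "ortho L" "\<And>x. F x = L x + b"
  shows "F (aff_refl \<beta> k x) = aff_refl (L \<beta>) (k + pairing b (L \<beta>)) (F x)"
proof -
  have "F (aff_refl \<beta> k x) = L x + b - (pairing x \<beta> - k) *\<^sub>R L \<beta>"
    using assms by (simp add: aff_refl_def ortho_diff ortho_scale)
  also have "\<dots> = aff_refl (L \<beta>) (k + pairing b (L \<beta>)) (F x)"
    using aff_pairing[OF assms, of x \<beta>] assms(2)[of x] by (simp add: aff_refl_def algebra_simps)
  finally show ?thesis .
qed

lemma aff_hyp_image:
  assumes "ortho L" "\<And>x. F x = L x + b"
  shows "F ` hyp \<delta> c = hyp (L \<delta>) (c + pairing b (L \<delta>))"
proof
  show "F ` hyp \<delta> c \<subseteq> hyp (L \<delta>) (c + pairing b (L \<delta>))"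
    using aff_pairing[OF assms] by (auto simp: hyp_def)
next
  show "hyp (L \<delta>) (c + pairing b (L \<delta>)) \<subseteq> F ` hyp \<delta> c"
  proof
    fix y assume y: "y \<in> hyp (L \<delta>) (c + pairing b (L \<delta>))"
    obtain x where x: "L x = y - b" using ortho_surj[OF assms(1)] by (metis surjD)
    have "F x = y" using assms(2)[of x] x by simp
    moreover have "pairing x \<delta> = c" using aff_pairing[OF assms, of x \<delta>] y \<open>F x = y\<close> by (simp add: hyp_def)
    ultimately show "y \<in> F ` hyp \<delta> c" by (auto simp: hyp_def)
  qed
qed

lemma hyp_eq_level:
  assumes "\<delta> \<noteq> 0" "hyp \<delta> c1 = hyp \<delta> c2" shows "c1 = c2"
proof -
  have "(c1 / 2) *\<^sub>R \<delta> \<in> hyp \<delta> c1" using assms(1) by (simp add: hyp_def pairing_scale1 pairing_self)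
  then have "(c1 / 2) *\<^sub>R \<delta> \<in> hyp \<delta> c2" using assms(2) by simp
  then show ?thesis using assms(1) by (simp add: hyp_def pairing_scale1 pairing_self)
qed

lemma rhat_eq: "rhat_at \<Gamma> j x = r_at \<Gamma> j x + (- real (lcount \<Gamma> j)) *\<^sub>R (\<Gamma> ! j)"
  by (simp add: rhat_at_def r_at_def aff_refl_eq)

lemma foldl_comp_app: "foldl (\<lambda>acc j. acc \<circ> f j) g (xs @ [y]) = foldl (\<lambda>acc j. acc \<circ> f j) g xs \<circ> f y"
  by simp

lemma prod_affine:
  assumes "\<forall>j\<in>set js. \<Gamma> ! j \<noteq> 0"
  shows "ortho (foldl (\<lambda>acc j. acc \<circ> r_at \<Gamma> j) id js) \<and>
    (\<forall>x. foldl (\<lambda>acc j. acc \<circ> rhat_at \<Gamma> j) id js x =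
         foldl (\<lambda>acc j. acc \<circ> r_at \<Gamma> j) id js x + foldl (\<lambda>acc j. acc \<circ> rhat_at \<Gamma> j) id js 0)"
  using assms
proof (induction js rule: rev_induct)
  case Nil then show ?case by (simp add: ortho_def linear_iff)
next
  case (snoc y js)
  let ?L = "foldl (\<lambda>acc j. acc \<circ> r_at \<Gamma> j) id js"
  let ?F = "foldl (\<lambda>acc j. acc \<circ> rhat_at \<Gamma> j) id js"
  have pj: "\<forall>j\<in>set js. \<Gamma> ! j \<noteq> 0" using snoc.prems by simp
  have IH0: "ortho ?L \<and> (\<forall>x. ?F x = ?L x + ?F 0)" by (rule snoc.IH[OF pj])
  have IH: "ortho ?L" "\<And>x. ?F x = ?L x + ?F 0" using IH0 by blast+
  have y: "\<Gamma> ! y \<noteq> 0" using snoc.prems by simp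
  have o: "ortho (?L \<circ> r_at \<Gamma> y)" using IH(1) ortho_refl[OF y] by (simp add: ortho_comp r_at_def)
  have r0: "r_at \<Gamma> y 0 = 0" by (simp add: r_at_def refl_def)
  show ?case
  proof (simp only: foldl_comp_app, intro conjI o allI)
    fix x
    let ?c = "(- real (lcount \<Gamma> y)) *\<^sub>R (\<Gamma> ! y)"
    have rx: "rhat_at \<Gamma> y x = r_at \<Gamma> y x + ?c" by (rule rhat_eq)
    have r0': "rhat_at \<Gamma> y 0 = ?c" using rhat_eq[of \<Gamma> y 0] r0 by simp
    have a: "?F (rhat_at \<Gamma> y x) = ?L (r_at \<Gamma> y x) + ?L ?c + ?F 0"
      using IH(2)[of "rhat_at \<Gamma> y x"] ortho_add[OF IH(1), of "r_at \<Gamma> y x" ?c] unfolding rx by simp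
    have b: "?F (rhat_at \<Gamma> y 0) = ?L ?c + ?F 0"
      using IH(2)[of "rhat_at \<Gamma> y 0"] r0' by simp
    show "(?F \<circ> rhat_at \<Gamma> y) x = (?L \<circ> r_at \<Gamma> y) x + (?F \<circ> rhat_at \<Gamma> y) 0"
      unfolding comp_apply a b by (simp add: algebra_simps)
  qed
qed

lemma prodJ_affine:
  assumes "\<forall>j\<in>J. \<Gamma> ! j \<noteq> 0" "finite J"
  shows "ortho (prodJ (r_at \<Gamma>) J) \<and> (\<forall>x. prodJ (rhat_at \<Gamma>) J x = prodJ (r_at \<Gamma>) J x + prodJ (rhat_at \<Gamma>) J 0)"
proof -
  have "\<forall>j\<in>set (sorted_list_of_set J). \<Gamma> ! j \<noteq> 0" using assms by simp
  then show ?thesis unfolding prodJ_def by (rule prod_affine)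
qed

lemma sorted_list_of_set_split:
  fixes A B :: "nat set"
  assumes "finite A" "finite B" "\<forall>a\<in>A. \<forall>b\<in>B. a < b"
  shows "sorted_list_of_set (A \<union> B) = sorted_list_of_set A @ sorted_list_of_set B"
proof -
  have "sorted_wrt (<) (sorted_list_of_set A @ sorted_list_of_set B) \<and>
        set (sorted_list_of_set A @ sorted_list_of_set B) = A \<union> B \<and>
        length (sorted_list_of_set A @ sorted_list_of_set B) = card (A \<union> B)"
  proof (intro conjI)
    show "sorted_wrt (<) (sorted_list_of_set A @ sorted_list_of_set B)"
      using assms by (simp add: sorted_wrt_append)
    show "set (sorted_list_of_set A @ sorted_list_of_set B) = A \<union> B" using assms by simp
    have "A \<inter> B = {}" using assms by auto
    then show "length (sorted_list_of_set A @ sorted_list_of_set B) = card (A \<union> B)"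
      using assms by (simp add: card_Un_disjoint)
  qed
  then show ?thesis using sorted_list_of_set_unique[of "A \<union> B"] assms by blast
qed

lemma foldl_comp_gen:
  fixes g :: "'a \<Rightarrow> 'a" and f :: "'c \<Rightarrow> 'a \<Rightarrow> 'a"
  shows "foldl (\<lambda>acc j. acc \<circ> f j) g ys = g \<circ> foldl (\<lambda>acc j. acc \<circ> f j) id ys"
proof (induction ys arbitrary: g)
  case Nil then show ?case by simp
next
  case (Cons y ys)
  let ?F = "\<lambda>acc j. acc \<circ> f j"
  have "foldl ?F g (y # ys) = foldl ?F (g \<circ> f y) ys" by (simp only: foldl_Cons)
  also have "\<dots> = (g \<circ> f y) \<circ> foldl ?F id ys" by (rule Cons.IH)
  also have "\<dots> = g \<circ> ((id \<circ> f y) \<circ> foldl ?F id ys)" by (simp only: comp_assoc id_comp)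
  also have "\<dots> = g \<circ> foldl ?F (id \<circ> f y) ys" by (simp only: Cons.IH[of "id \<circ> f y", symmetric])
  also have "\<dots> = g \<circ> foldl ?F id (y # ys)" by (simp only: foldl_Cons)
  finally show ?case .
qed

lemma prodJ_split:
  fixes J :: "nat set"
  assumes "finite J" "t \<le> n"
  shows "prodJ f (J \<inter> {..<n}) = prodJ f (J \<inter> {..<t}) \<circ> prodJ f (J \<inter> {t..<n})"
proof -
  have e: "J \<inter> {..<n} = (J \<inter> {..<t}) \<union> (J \<inter> {t..<n})" using assms by auto
  have "sorted_list_of_set (J \<inter> {..<n}) = sorted_list_of_set (J \<inter> {..<t}) @ sorted_list_of_set (J \<inter> {t..<n})"
    unfolding e by (rule sorted_list_of_set_split) (use assms in auto)
  then show ?thesis unfolding prodJ_def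
    by (simp only: foldl_append) (rule foldl_comp_gen)
qed


context
  fixes R :: "'a::euclidean_space set"
  assumes RS: "root_system R"
begin

lemma rs_nz: "\<alpha> \<in> R \<Longrightarrow> \<alpha> \<noteq> 0"
  using RS unfolding root_system_def by blast
lemma rs_refl: "\<alpha> \<in> R \<Longrightarrow> \<beta> \<in> R \<Longrightarrow> refl \<alpha> \<beta> \<in> R"
  using RS unfolding root_system_def by blast
lemma rs_neg: "\<alpha> \<in> R \<Longrightarrow> - \<alpha> \<in> R"
  using rs_refl[of \<alpha> \<alpha>] refl_self[OF rs_nz] by simp
lemma rs_int: "\<alpha> \<in> R \<Longrightarrow> \<beta> \<in> R \<Longrightarrow> pairing \<beta> \<alpha> \<in> \<int>"
  using RS unfolding root_system_def by blast
lemma rs_red: "\<alpha> \<in> R \<Longrightarrow> c *\<^sub>R \<alpha> \<in> R \<Longrightarrow> c = 1 \<or> c = -1"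
  using RS unfolding root_system_def by blast
lemma rs_finite: "finite R"
  using RS unfolding root_system_def by blast

lemma rs_parallel:
  assumes "\<alpha> \<in> R" "\<beta> \<in> R" "coroot \<beta> = t *\<^sub>R coroot \<alpha>"
  shows "\<beta> = \<alpha> \<or> \<beta> = - \<alpha>"
proof -
  have a: "\<alpha> \<noteq> 0" "\<beta> \<noteq> 0" using assms rs_nz by auto
  then have "\<alpha> \<bullet> \<alpha> \<noteq> 0" "\<beta> \<bullet> \<beta> \<noteq> 0" by auto
  have "\<beta> = ((\<beta> \<bullet> \<beta>) / 2) *\<^sub>R coroot \<beta>" using a by (simp add: coroot_def)
  also have "\<dots> = ((\<beta> \<bullet> \<beta>) / 2 * t * (2 / (\<alpha> \<bullet> \<alpha>))) *\<^sub>R \<alpha>"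
    using assms(3) by (simp add: coroot_def)
  finally have e: "\<beta> = ((\<beta> \<bullet> \<beta>) / 2 * t * (2 / (\<alpha> \<bullet> \<alpha>))) *\<^sub>R \<alpha>" .
  define c where "c = (\<beta> \<bullet> \<beta>) / 2 * t * (2 / (\<alpha> \<bullet> \<alpha>))"
  have e2: "\<beta> = c *\<^sub>R \<alpha>" using e c_def by simp
  then have "c = 1 \<or> c = -1"
    using rs_red[OF assms(1)] assms(2) by metis
  then show ?thesis using e2 by (metis scaleR_one scaleR_minus1_left)
qed

lemma hyp_not_sub:
  assumes "\<beta> \<in> R" "\<delta> \<in> R" "\<delta> \<noteq> \<beta>" "\<delta> \<noteq> - \<beta>"
  shows "\<not> hyp \<beta> k \<subseteq> hyp \<delta> m"
proof
  assume sub: "hyp \<beta> k \<subseteq> hyp \<delta> m"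
  define a where "a = coroot \<beta>"
  define b where "b = coroot \<delta>"
  have an: "a \<noteq> 0" using rs_nz[OF assms(1)] by (simp add: a_def coroot_def)
  then have aa: "a \<bullet> a \<noteq> 0" by simp
  define x0 where "x0 = (k / (a \<bullet> a)) *\<^sub>R a"
  have hx: "x \<in> hyp \<beta> k \<longleftrightarrow> x \<bullet> a = k" for x by (simp add: hyp_def pairing_def a_def)
  have hy: "x \<in> hyp \<delta> m \<longleftrightarrow> x \<bullet> b = m" for x by (simp add: hyp_def pairing_def b_def)
  have x0: "x0 \<bullet> a = k" using aa by (simp add: x0_def)
  define v where "v = b - ((b \<bullet> a) / (a \<bullet> a)) *\<^sub>R a"
  have "v \<bullet> a = b \<bullet> a - (b \<bullet> a) / (a \<bullet> a) * (a \<bullet> a)" by (simp add: v_def inner_diff_left)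
  then have va: "v \<bullet> a = 0" using aa by simp
  have "(x0 + v) \<bullet> a = k" using x0 va by (simp add: inner_add_left)
  then have "(x0 + v) \<bullet> b = m" "x0 \<bullet> b = m" using sub x0 hx hy by blast+
  then have vb: "v \<bullet> b = 0" by (simp add: inner_add_left)
  have "v \<bullet> v = v \<bullet> b - ((b \<bullet> a) / (a \<bullet> a)) * (v \<bullet> a)" by (simp add: v_def inner_diff_right)
  then have "v = 0" using va vb by simp
  then have "coroot \<delta> = ((b \<bullet> a) / (a \<bullet> a)) *\<^sub>R coroot \<beta>" by (simp add: v_def a_def b_def)
  then have "\<delta> = \<beta> \<or> \<delta> = - \<beta>" by (rule rs_parallel[OF assms(1,2)])
  then show False using assms by blast
qed

lemma aff_dim_hyp: "\<beta> \<in> R \<Longrightarrow> aff_dim (hyp \<beta> k) = int DIM('a) - 1"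
proof -
  assume b: "\<beta> \<in> R"
  have "coroot \<beta> \<noteq> 0" using rs_nz[OF b] by (simp add: coroot_def)
  moreover have "hyp \<beta> k = {x. coroot \<beta> \<bullet> x = k}" by (auto simp: hyp_def pairing_def inner_commute)
  ultimately show ?thesis by simp
qed

lemma aff_dim_hyp2:
  assumes "\<beta> \<in> R" "\<delta> \<in> R" "\<delta> \<noteq> \<beta>" "\<delta> \<noteq> - \<beta>"
  shows "aff_dim (hyp \<beta> k \<inter> hyp \<delta> m) \<le> int DIM('a) - 2"
proof -
  have e: "hyp \<delta> m = {x. coroot \<delta> \<bullet> x = m}" by (auto simp: hyp_def pairing_def inner_commute)
  have af: "affine (hyp \<beta> k)" by (simp add: hyp_def pairing_def affine_hyperplane[of "coroot \<beta>" k, unfolded inner_commute[of "coroot \<beta>"]])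
  have ns: "\<not> hyp \<beta> k \<subseteq> {v. coroot \<delta> \<bullet> v = m}" using hyp_not_sub[OF assms, of k m] unfolding e .
  have d: "DIM('a) \<ge> 1" using DIM_positive by (simp add: Suc_le_eq)
  show ?thesis
    using aff_dim_affine_Int_hyperplane[OF af, of "coroot \<delta>" m] ns aff_dim_hyp[OF assms(1), of k] d
    unfolding e by (auto split: if_splits)
qed

lemma walls_refl:
  assumes g: "\<gamma> \<in> R" and x: "x \<in> walls R"
  shows "aff_refl \<gamma> (of_int c) x \<in> walls R"
proof -
  obtain \<delta> k where d: "\<delta> \<in> R" and k: "x \<in> hyp \<delta> (of_int k)" using x by (auto simp: walls_def)
  have o: "ortho (refl \<gamma>)" by (rule ortho_refl[OF rs_nz[OF g]])
  have F: "\<And>y. aff_refl \<gamma> (of_int c) y = refl \<gamma> y + (of_int c *\<^sub>R \<gamma>)" by (simp add: aff_refl_eq)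
  have rd: "refl \<gamma> \<delta> \<in> R" by (rule rs_refl[OF g d])
  obtain n where n: "pairing \<gamma> (refl \<gamma> \<delta>) = of_int n" using rs_int[OF rd g] by (auto elim: Ints_cases)
  have "pairing (aff_refl \<gamma> (of_int c) x) (refl \<gamma> \<delta>) = pairing x \<delta> + pairing (of_int c *\<^sub>R \<gamma>) (refl \<gamma> \<delta>)"
    by (rule aff_pairing[OF o F])
  also have "\<dots> = of_int (k + c * n)" using k n by (simp add: hyp_def pairing_scale1)
  finally have "aff_refl \<gamma> (of_int c) x \<in> hyp (refl \<gamma> \<delta>) (of_int (k + c * n))" by (simp add: hyp_def)
  then show ?thesis using rd unfolding walls_def by blast
qed

lemma components_invol:
  fixes f :: "'b::topological_space \<Rightarrow> 'b"
  assumes cont: "continuous_on UNIV f" and inv: "\<And>x. f (f x) = x" and S: "\<And>x. x \<in> S \<Longrightarrow> f x \<in> S"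
    and C: "C \<in> components S"
  shows "f ` C \<in> components S"
proof -
  have sub: "f ` connected_component_set S y \<subseteq> connected_component_set S (f y)" if "y \<in> S" for y
  proof (rule connected_component_maximal)
    show "f y \<in> f ` connected_component_set S y" using that by simp
    show "connected (f ` connected_component_set S y)"
      by (rule connected_continuous_image) (auto intro: continuous_on_subset[OF cont])
    show "f ` connected_component_set S y \<subseteq> S" using connected_component_subset S by blast
  qed
  obtain x where x: "x \<in> S" "C = connected_component_set S x" using C by (auto simp: components_iff)
  have "f ` C = connected_component_set S (f x)"
  proof
    show "f ` C \<subseteq> connected_component_set S (f x)" using sub x by simp
    have "f ` connected_component_set S (f x) \<subseteq> connected_component_set S (f (f x))" using sub S x by blast
    then have "f ` connected_component_set S (f x) \<subseteq> C" using inv x by simp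
    then have "f ` f ` connected_component_set S (f x) \<subseteq> f ` C" by blast
    then show "connected_component_set S (f x) \<subseteq> f ` C" using inv by (simp add: image_image)
  qed
  then show ?thesis using S x by (auto simp: components_iff)
qed

lemma cont_aff_refl: "continuous_on UNIV (aff_refl \<gamma> k)"
  unfolding aff_refl_def pairing_def by (intro continuous_intros)

lemma alcove_refl:
  assumes g: "\<gamma> \<in> R" and A: "is_alcove R A"
  shows "is_alcove R (aff_refl \<gamma> (of_int c) ` A)"
  unfolding is_alcove_def
proof (rule components_invol[OF cont_aff_refl])
  show "\<And>x. aff_refl \<gamma> (of_int c) (aff_refl \<gamma> (of_int c) x) = x" by (rule aff_refl_invol[OF rs_nz[OF g]])
  show "\<And>x. x \<in> UNIV - walls R \<Longrightarrow> aff_refl \<gamma> (of_int c) x \<in> UNIV - walls R"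
    using walls_refl[OF g] aff_refl_invol[OF rs_nz[OF g]] by (metis Diff_iff UNIV_I)
  show "A \<in> components (UNIV - walls R)" using A by (simp add: is_alcove_def)
qed

end

lemma aff_closure:
  assumes "ortho L" "\<And>x. F x = L x + b"
  shows "closure (F ` X) = F ` closure X"
proof -
  have e: "F ` Y = (+) b ` (L ` Y)" for Y using assms(2) by (auto simp: image_iff add.commute)
  have l: "linear L" "inj L" using assms(1) ortho_inj by (auto simp: ortho_def)
  show ?thesis unfolding e closure_translation closure_injective_linear_image[OF l, symmetric] ..
qed

lemma aff_affdim:
  assumes "ortho L" "\<And>x. F x = L x + b"
  shows "aff_dim (F ` X) = aff_dim X"
proof -
  have e: "F ` Y = (+) b ` (L ` Y)" for Y using assms(2) by (auto simp: image_iff add.commute)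
  have l: "linear L" "inj L" using assms(1) ortho_inj by (auto simp: ortho_def)
  show ?thesis unfolding e aff_dim_translation_eq using l by simp
qed

lemma aff_inj:
  assumes "ortho L" "\<And>x. F x = L x + b"
  shows "inj F"
  using ortho_inj[OF assms(1)] assms(2) by (auto simp: inj_def)


definition idx :: "'a::euclidean_space set \<Rightarrow> 'a \<Rightarrow> int" where
  "idx A \<delta> = floor (pairing (SOME x. x \<in> A) \<delta>)"

context
  fixes R :: "'a::euclidean_space set"
  assumes RS: "root_system R"
begin

lemma alcove_ne: "is_alcove R A \<Longrightarrow> A \<noteq> {}"
  by (simp add: is_alcove_def in_components_nonempty)

lemma alcove_nowall: "is_alcove R A \<Longrightarrow> x \<in> A \<Longrightarrow> \<delta> \<in> R \<Longrightarrow> pairing x \<delta> \<noteq> of_int k"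
  using in_components_subset unfolding is_alcove_def walls_def hyp_def by fastforce

lemma alcove_floor_le:
  assumes A: "is_alcove R A" and x: "x \<in> A" and y: "y \<in> A" and d: "\<delta> \<in> R" and le: "pairing x \<delta> \<le> pairing y \<delta>"
  shows "floor (pairing x \<delta>) = floor (pairing y \<delta>)"
proof (rule ccontr)
  assume ne: "floor (pairing x \<delta>) \<noteq> floor (pairing y \<delta>)"
  define m where "m = floor (pairing y \<delta>)"
  have "floor (pairing x \<delta>) \<le> m" using le by (simp add: m_def floor_mono)
  then have lt: "floor (pairing x \<delta>) < m" using ne m_def by simp
  have "pairing x \<delta> < of_int m" using lt by linarith
  moreover have "of_int m \<le> pairing y \<delta>" by (simp add: m_def)
  moreover have "connected A" using A by (simp add: is_alcove_def in_components_connected)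
  ultimately obtain z where "z \<in> A" "inner (coroot \<delta>) z = of_int m"
    using connected_ivt_hyperplane[of A x y "coroot \<delta>" "of_int m"] x y
    by (auto simp: pairing_def inner_commute)
  then show False using alcove_nowall[OF A _ d, of z m] by (simp add: pairing_def inner_commute)
qed

lemma alcove_floor:
  assumes A: "is_alcove R A" and x: "x \<in> A" and y: "y \<in> A" and d: "\<delta> \<in> R"
  shows "floor (pairing x \<delta>) = floor (pairing y \<delta>)"
  using alcove_floor_le[OF A x y d] alcove_floor_le[OF A y x d] by linarith

lemma idx_floor:
  assumes A: "is_alcove R A" and x: "x \<in> A" and d: "\<delta> \<in> R"
  shows "idx A \<delta> = floor (pairing x \<delta>)"
proof -
  have "(SOME x. x \<in> A) \<in> A" using x by (rule someI)
  then show ?thesis unfolding idx_def using alcove_floor[OF A _ x d] by blast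
qed

lemma idx_bounds:
  assumes A: "is_alcove R A" and x: "x \<in> A" and d: "\<delta> \<in> R"
  shows "of_int (idx A \<delta>) < pairing x \<delta> \<and> pairing x \<delta> < of_int (idx A \<delta>) + 1"
proof -
  have "pairing x \<delta> \<noteq> of_int (floor (pairing x \<delta>))" by (rule alcove_nowall[OF A x d])
  then show ?thesis using idx_floor[OF A x d] by linarith
qed

lemma idx_unique:
  assumes A: "is_alcove R A" and x: "x \<in> A" and d: "\<delta> \<in> R"
    and "of_int j < pairing x \<delta>" "pairing x \<delta> < of_int j + 1"
  shows "idx A \<delta> = j"
  using idx_floor[OF A x d] assms(4,5) by linarith

lemma idx_neg:
  assumes A: "is_alcove R A" and d: "\<delta> \<in> R"
  shows "idx A (- \<delta>) = - idx A \<delta> - 1"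
proof -
  obtain x where x: "x \<in> A" using alcove_ne[OF A] by blast
  have "of_int (idx A \<delta>) < pairing x \<delta> \<and> pairing x \<delta> < of_int (idx A \<delta>) + 1" by (rule idx_bounds[OF A x d])
  then show ?thesis by (intro idx_unique[OF A x rs_neg[OF RS d]]) auto
qed

lemma closure_strip:
  assumes A: "is_alcove R A" and d: "\<delta> \<in> R"
  shows "closure A \<subseteq> {x. of_int (idx A \<delta>) \<le> pairing x \<delta> \<and> pairing x \<delta> \<le> of_int (idx A \<delta>) + 1}"
proof (rule closure_minimal)
  show "A \<subseteq> {x. of_int (idx A \<delta>) \<le> pairing x \<delta> \<and> pairing x \<delta> \<le> of_int (idx A \<delta>) + 1}"
    using idx_bounds[OF A _ d] by fastforce
  have "{x. of_int (idx A \<delta>) \<le> pairing x \<delta> \<and> pairing x \<delta> \<le> of_int (idx A \<delta>) + 1} =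
        {x. of_int (idx A \<delta>) \<le> inner x (coroot \<delta>)} \<inter> {x. inner x (coroot \<delta>) \<le> of_int (idx A \<delta>) + 1}"
    by (auto simp: pairing_def)
  then show "closed {x. of_int (idx A \<delta>) \<le> pairing x \<delta> \<and> pairing x \<delta> \<le> of_int (idx A \<delta>) + 1}"
    by (simp add: closed_Int closed_halfspace_component_le closed_Collect_le continuous_on_inner continuous_on_const continuous_on_id)
qed

lemma edge_data:
  assumes E: "alcove_edge R A \<beta> B"
  shows "\<exists>k::int. B = aff_refl \<beta> (of_int k) ` A \<and> idx A \<beta> = k - 1 \<and> idx B \<beta> = k \<and>
           (\<forall>\<delta>\<in>R. \<delta> \<noteq> \<beta> \<and> \<delta> \<noteq> - \<beta> \<longrightarrow> idx B \<delta> = idx A \<delta>)"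
proof -
  obtain k :: int where Bk: "B = aff_refl \<beta> (of_int k) ` A"
    and fd: "aff_dim (closure A \<inter> hyp \<beta> (of_int k)) = int DIM('a) - 1"
    and or: "\<forall>\<nu>\<in>A. pairing \<nu> \<beta> < of_int k"
    and A: "is_alcove R A" and B: "is_alcove R B" and b: "\<beta> \<in> R"
    using E unfolding alcove_edge_def by blast
  have bnz: "\<beta> \<noteq> 0" by (rule rs_nz[OF RS b])
  define \<sigma> where "\<sigma> = aff_refl \<beta> (of_int k)"
  have o: "ortho (refl \<beta>)" by (rule ortho_refl[OF bnz])
  have F: "\<And>y. \<sigma> y = refl \<beta> y + (of_int k *\<^sub>R \<beta>)" by (simp add: \<sigma>_def aff_refl_eq)
  let ?F = "closure A \<inter> hyp \<beta> (of_int k)"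
  have d1: "int DIM('a) - 1 \<ge> 0" using DIM_positive[where 'a='a] by linarith
  have Fne: "?F \<noteq> {}"
  proof
    assume "?F = {}"
    then have "aff_dim ?F = -1" by simp
    then show False using fd d1 by simp
  qed
  obtain z where z: "z \<in> closure A" "pairing z \<beta> = of_int k" using Fne by (auto simp: hyp_def)
  have zs: "of_int (idx A \<beta>) \<le> (of_int k::real)" "of_int k \<le> of_int (idx A \<beta>) + (1::real)"
    using closure_strip[OF A b] z by force+
  obtain x where x: "x \<in> A" using alcove_ne[OF A] by blast
  have "of_int (idx A \<beta>) < pairing x \<beta>" using idx_bounds[OF A x b] by simp
  then have "of_int (idx A \<beta>) < (of_int k :: real)" using or x by fastforce
  then have iA: "idx A \<beta> = k - 1" using zs by linarith
  have "pairing (\<sigma> x) \<beta> = 2 * of_int k - pairing x \<beta>" unfolding \<sigma>_def by (rule pairing_aff_refl_self[OF bnz])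
  moreover have "of_int (k - 1) < pairing x \<beta>" "pairing x \<beta> < of_int k"
    using idx_bounds[OF A x b] iA or x by auto
  ultimately have "of_int k < pairing (\<sigma> x) \<beta>" "pairing (\<sigma> x) \<beta> < of_int k + 1" by auto
  moreover have "\<sigma> x \<in> B" using Bk x \<sigma>_def by simp
  ultimately have iB: "idx B \<beta> = k" using idx_unique[OF B _ b] by blast
  have other: "idx B \<delta> = idx A \<delta>" if d: "\<delta> \<in> R" "\<delta> \<noteq> \<beta>" "\<delta> \<noteq> - \<beta>" for \<delta>
  proof (rule ccontr)
    assume ne: "idx B \<delta> \<noteq> idx A \<delta>"
    have clB: "closure B = \<sigma> ` closure A" using Bk aff_closure[OF o F] \<sigma>_def by simp
    have sub: "?F \<subseteq> hyp \<delta> (of_int (max (idx A \<delta>) (idx B \<delta>))) \<inter> hyp \<beta> (of_int k)"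
    proof
      fix y assume y: "y \<in> ?F"
      have "\<sigma> y = y" unfolding \<sigma>_def by (rule aff_refl_fix) (use y in \<open>simp add: hyp_def\<close>)
      then have "y \<in> closure B" using clB y by (metis IntD1 image_eqI)
      then have b1: "of_int (idx B \<delta>) \<le> pairing y \<delta>" "pairing y \<delta> \<le> of_int (idx B \<delta>) + 1"
        using closure_strip[OF B d(1)] by auto
      have b2: "of_int (idx A \<delta>) \<le> pairing y \<delta>" "pairing y \<delta> \<le> of_int (idx A \<delta>) + 1"
        using closure_strip[OF A d(1)] y by auto
      have "pairing y \<delta> = of_int (max (idx A \<delta>) (idx B \<delta>))"
      proof (cases "idx A \<delta> < idx B \<delta>")
        case True then have "idx A \<delta> + 1 \<le> idx B \<delta>" by simp
        then show ?thesis using b1 b2 True by (simp add: max_def)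
      next
        case False then have "idx B \<delta> + 1 \<le> idx A \<delta>" using ne by simp
        then show ?thesis using b1 b2 False by (simp add: max_def)
      qed
      then show "y \<in> hyp \<delta> (of_int (max (idx A \<delta>) (idx B \<delta>))) \<inter> hyp \<beta> (of_int k)" using y by (simp add: hyp_def)
    qed
    have "aff_dim ?F \<le> aff_dim (hyp \<beta> (of_int k) \<inter> hyp \<delta> (of_int (max (idx A \<delta>) (idx B \<delta>))))"
      using aff_dim_subset[OF sub] by (simp add: Int_commute)
    also have "\<dots> \<le> int DIM('a) - 2" by (rule aff_dim_hyp2[OF RS b d])
    finally show False using fd by simp
  qed
  show ?thesis using Bk iA iB other by blast
qed

end


context
  fixes R :: "'a::euclidean_space set"
  assumes RS: "root_system R"
begin

lemma edge_refl:
  assumes E: "alcove_edge R A \<beta> B" and g: "\<gamma> \<in> R"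
  shows "\<exists>\<beta>'. alcove_edge R (aff_refl \<gamma> (of_int c) ` A) \<beta>' (aff_refl \<gamma> (of_int c) ` B)"
proof -
  obtain k :: int where Bk: "B = aff_refl \<beta> (of_int k) ` A"
    and fd: "aff_dim (closure A \<inter> hyp \<beta> (of_int k)) = int DIM('a) - 1"
    and or: "\<forall>\<nu>\<in>A. pairing \<nu> \<beta> < of_int k"
    and A: "is_alcove R A" and B: "is_alcove R B" and b: "\<beta> \<in> R"
    using E unfolding alcove_edge_def by blast
  define \<sigma> where "\<sigma> = aff_refl \<gamma> (of_int c)"
  have o: "ortho (refl \<gamma>)" by (rule ortho_refl[OF rs_nz[OF RS g]])
  have F: "\<And>y. \<sigma> y = refl \<gamma> y + (of_int c *\<^sub>R \<gamma>)" by (simp add: \<sigma>_def aff_refl_eq)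
  define \<beta>' where "\<beta>' = refl \<gamma> \<beta>"
  have b': "\<beta>' \<in> R" using rs_refl[OF RS g b] by (simp add: \<beta>'_def)
  obtain n where n: "pairing \<gamma> \<beta>' = of_int n" using rs_int[OF RS b' g] by (auto elim: Ints_cases)
  have pb: "pairing (of_int c *\<^sub>R \<gamma>) \<beta>' = of_int (c * n)" using n by (simp add: pairing_scale1)
  define k' where "k' = k + c * n"
  have "alcove_edge R (\<sigma> ` A) \<beta>' (\<sigma> ` B)"
    unfolding alcove_edge_def
  proof (intro conjI exI[of _ k'])
    show "is_alcove R (\<sigma> ` A)" "is_alcove R (\<sigma> ` B)" using alcove_refl[OF RS g] A B \<sigma>_def by auto
    show "\<beta>' \<in> R" by (rule b')
    have "\<sigma> ` B = (\<lambda>x. \<sigma> (aff_refl \<beta> (of_int k) x)) ` A" using Bk by (simp add: image_image)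
    also have "\<dots> = (\<lambda>x. aff_refl \<beta>' (of_int k') (\<sigma> x)) ` A"
      using aff_conj[OF o F, of \<beta> "of_int k"] pb by (simp add: \<beta>'_def k'_def)
    also have "\<dots> = aff_refl \<beta>' (of_int k') ` \<sigma> ` A" by (simp add: image_image)
    finally show "\<sigma> ` B = aff_refl \<beta>' (of_int k') ` \<sigma> ` A" .
    have h: "\<sigma> ` hyp \<beta> (of_int k) = hyp \<beta>' (of_int k')"
      using aff_hyp_image[OF o F, of \<beta> "of_int k"] pb by (simp add: \<beta>'_def k'_def)
    have "closure (\<sigma> ` A) \<inter> hyp \<beta>' (of_int k') = \<sigma> ` (closure A \<inter> hyp \<beta> (of_int k))"
      using aff_closure[OF o F] h image_Int[OF aff_inj[OF o F]] by simp
    then show "aff_dim (closure (\<sigma> ` A) \<inter> hyp \<beta>' (of_int k')) = int DIM('a) - 1"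
      using aff_affdim[OF o F] fd by simp
    show "\<forall>\<nu>\<in>\<sigma> ` A. pairing \<nu> \<beta>' < of_int k'"
    proof
      fix \<nu> assume "\<nu> \<in> \<sigma> ` A"
      then obtain x where x: "x \<in> A" "\<nu> = \<sigma> x" by blast
      have "pairing (\<sigma> x) \<beta>' = pairing x \<beta> + pairing (of_int c *\<^sub>R \<gamma>) \<beta>'"
        using aff_pairing[OF o F, of x \<beta>] by (simp add: \<beta>'_def)
      then show "pairing \<nu> \<beta>' < of_int k'" using or x pb by (simp add: k'_def)
    qed
  qed
  then show ?thesis unfolding \<sigma>_def by blast
qed

lemma shorten:
  fixes f :: "nat \<Rightarrow> 'a set"
  assumes edges: "\<forall>m<L. \<exists>\<beta>. alcove_edge R (f m) \<beta> (f (Suc m))"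
    and ij: "i < j" "j < L" and g: "\<gamma> \<in> R"
    and fi: "f (Suc i) = aff_refl \<gamma> (of_int c) ` f i"
    and fj: "f (Suc j) = aff_refl \<gamma> (of_int c) ` f j"
  shows "\<exists>h. (\<forall>m. Suc m < L - 1 \<longrightarrow> (\<exists>\<beta>. alcove_edge R (h m) \<beta> (h (Suc m)))) \<and> h 0 = f 0 \<and> h (L - 2) = f L"
proof -
  define \<sigma> where "\<sigma> = aff_refl \<gamma> (of_int c)"
  have inv: "\<sigma> ` \<sigma> ` X = X" for X
    using aff_refl_invol[OF rs_nz[OF RS g]] by (simp add: \<sigma>_def image_image)
  have fi': "f i = \<sigma> ` f (Suc i)" using fi inv by (simp add: \<sigma>_def)
  have fj': "f (Suc j) = \<sigma> ` f j" using fj by (simp add: \<sigma>_def)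
  define h where "h m = (if m < i then f m else if m < j then \<sigma> ` f (Suc m) else f (m + 2))" for m
  have he: "\<exists>\<beta>. alcove_edge R (h m) \<beta> (h (Suc m))" if m: "Suc m < L - 1" for m
  proof -
    consider "Suc m < i" | "Suc m = i" | "i \<le> m \<and> Suc m < j" | "Suc m = j" | "j \<le> m" by linarith
    then show ?thesis
    proof cases
      case 1 then show ?thesis using edges m by (simp add: h_def)
    next
      case 2 then have "h m = f m" "h (Suc m) = f (Suc m)" using fi' ij by (auto simp: h_def)
      then show ?thesis using edges m by simp
    next
      case 3 then have "h m = \<sigma> ` f (Suc m)" "h (Suc m) = \<sigma> ` f (Suc (Suc m))" by (auto simp: h_def)
      moreover obtain \<beta> where "alcove_edge R (f (Suc m)) \<beta> (f (Suc (Suc m)))" using edges m by fastforce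
      ultimately show ?thesis using edge_refl[OF _ g] \<sigma>_def by metis
    next
      case 4 then have "h m = f (Suc j)" "h (Suc m) = f (Suc (Suc j))" using fj' ij by (auto simp: h_def)
      then show ?thesis using edges m 4 by simp
    next
      case 5 then have "h m = f (m + 2)" "h (Suc m) = f (Suc (m + 2))" using ij by (auto simp: h_def)
      then show ?thesis using edges m by simp
    qed
  qed
  have h0: "h 0 = f 0"
  proof (cases "i = 0")
    case True then show ?thesis using fi' ij by (simp add: h_def)
  next
    case False then show ?thesis by (simp add: h_def)
  qed
  have hL: "h (L - 2) = f L"
  proof (cases "j = L - 1")
    case True
    have "\<not> L - 2 < i" "L - 2 < j" using True ij by linarith+
    then have "h (L - 2) = \<sigma> ` f (Suc (L - 2))" by (simp add: h_def)
    also have "Suc (L - 2) = j" using True ij by simp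
    finally show ?thesis using fj' True ij by simp
  next
    case False
    then have "\<not> L - 2 < j" "\<not> L - 2 < i" "Suc (Suc (L - 2)) = L" using ij by linarith+
    then show ?thesis by (simp add: h_def)
  qed
  show ?thesis using he h0 hL by blast
qed

lemma chain_no_double:
  assumes LC: "lambda_chain R S lam \<Gamma>"
    and ij: "i < j" "j < length \<Gamma>" and g: "\<gamma> \<in> R"
    and fi: "chain_alcoves R S \<Gamma> (Suc i) = aff_refl \<gamma> (of_int c) ` chain_alcoves R S \<Gamma> i"
    and fj: "chain_alcoves R S \<Gamma> (Suc j) = aff_refl \<gamma> (of_int c) ` chain_alcoves R S \<Gamma> j"
  shows False
proof -
  let ?f = "chain_alcoves R S \<Gamma>"
  let ?L = "length \<Gamma>"
  have edges: "\<forall>m<?L. \<exists>\<beta>. alcove_edge R (?f m) \<beta> (?f (Suc m))" using LC unfolding lambda_chain_def by blast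
  obtain h where h: "\<forall>m. Suc m < ?L - 1 \<longrightarrow> (\<exists>\<beta>. alcove_edge R (h m) \<beta> (h (Suc m)))" "h 0 = ?f 0" "h (?L - 2) = ?f ?L"
    using shorten[OF edges ij g fi fj] by blast
  define As where "As = map h [0..<?L - 1]"
  have len: "length As = ?L - 1" by (simp add: As_def)
  have L2: "?L \<ge> 2" using ij by simp
  have ne: "As \<noteq> []" using L2 len by auto
  have path: "alcove_path R As" unfolding alcove_path_def using h(1) by (simp add: As_def)
  have hd: "hd As = fund_alcove R S" using h(2) L2 by (simp add: As_def hd_map)
  have lst: "last As = (\<lambda>\<nu>. \<nu> - lam) ` fund_alcove R S"
  proof -
    have "last As = As ! (?L - 2)" using ne len L2 by (simp add: last_conv_nth numeral_2_eq_2)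
    also have "\<dots> = h (?L - 2)" using L2 by (simp add: As_def)
    also have "\<dots> = ?f ?L" by (rule h(3))
    also have "\<dots> = (\<lambda>\<nu>. \<nu> - lam) ` fund_alcove R S" using LC unfolding lambda_chain_def by blast
    finally show ?thesis .
  qed
  have "?L \<le> length As - 1" using LC ne path hd lst unfolding lambda_chain_def by blast
  then show False using len L2 by simp
qed

end


lemma discrete_ivt:
  fixes a :: "nat \<Rightarrow> int"
  assumes step: "\<forall>m. s \<le> m \<and> m < e \<longrightarrow> a (Suc m) \<ge> a m - 1"
    and as: "a s \<ge> 1" and ae: "a e \<le> 0" and se: "s \<le> e"
  shows "\<exists>m. s \<le> m \<and> m < e \<and> a m \<ge> 1 \<and> a (Suc m) \<le> 0 \<and> a (Suc m) \<ge> a m - 1"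
proof -
  define M where "M = {m. s \<le> m \<and> m \<le> e \<and> a m \<ge> 1}"
  have fin: "finite M" by (simp add: M_def)
  have sM: "s \<in> M" using as se by (simp add: M_def)
  define m where "m = Max M"
  have mM: "m \<in> M" using fin sM Max_in m_def by blast
  have "m \<le> e" "a m \<ge> 1" using mM by (auto simp: M_def)
  then have me: "m < e" using ae by (metis le_neq_implies_less not_one_le_zero order_trans)
  have "Suc m \<notin> M" using fin m_def by (metis Max_ge Suc_n_not_le_n)
  then have "a (Suc m) \<le> 0" using mM me by (auto simp: M_def)
  then show ?thesis using mM me step by (auto simp: M_def)
qed

declare chain_alcoves.simps(2)[simp del]

context
  fixes R S :: "'a::euclidean_space set" and lam :: 'a and \<Gamma> :: "'a list"
  assumes RS: "root_system R" and LC: "lambda_chain R S lam \<Gamma>" and DOM: "dominant R S lam"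
begin

abbreviation "fa \<equiv> chain_alcoves R S \<Gamma>"

lemma chain_edge: "m < length \<Gamma> \<Longrightarrow> \<Gamma> ! m \<in> R \<and> alcove_edge R (fa m) (- (\<Gamma> ! m)) (fa (Suc m))"
  using LC unfolding lambda_chain_def by blast

lemma chain_alcove: "m \<le> length \<Gamma> \<Longrightarrow> 0 < length \<Gamma> \<Longrightarrow> is_alcove R (fa m)"
proof -
  assume m: "m \<le> length \<Gamma>" and L: "0 < length \<Gamma>"
  show ?thesis
  proof (cases "m < length \<Gamma>")
    case True then show ?thesis using chain_edge[OF True] by (simp add: alcove_edge_def)
  next
    case False then have e: "m = Suc (length \<Gamma> - 1)" using m L by simp
    have "alcove_edge R (fa (length \<Gamma> - 1)) (- (\<Gamma> ! (length \<Gamma> - 1))) (fa (Suc (length \<Gamma> - 1)))"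
      using chain_edge[of "length \<Gamma> - 1"] L by simp
    then show ?thesis unfolding e alcove_edge_def by blast
  qed
qed

lemma chain_step:
  assumes m: "m < length \<Gamma>" and d: "\<delta> \<in> R"
  shows "idx (fa (Suc m)) \<delta> = idx (fa m) \<delta> + (if \<Gamma> ! m = - \<delta> then 1 else if \<Gamma> ! m = \<delta> then -1 else 0)
     \<and> ((\<Gamma> ! m = \<delta> \<or> \<Gamma> ! m = - \<delta>) \<longrightarrow>
          fa (Suc m) = aff_refl \<delta> (of_int (max (idx (fa m) \<delta>) (idx (fa (Suc m)) \<delta>))) ` fa m)"
proof -
  have g: "\<Gamma> ! m \<in> R" and E: "alcove_edge R (fa m) (- (\<Gamma> ! m)) (fa (Suc m))" using chain_edge[OF m] by auto
  have A: "is_alcove R (fa m)" and B: "is_alcove R (fa (Suc m))" using E by (auto simp: alcove_edge_def)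
  obtain k :: int where Bk: "fa (Suc m) = aff_refl (- (\<Gamma> ! m)) (of_int k) ` fa m"
    and iA: "idx (fa m) (- (\<Gamma> ! m)) = k - 1" and iB: "idx (fa (Suc m)) (- (\<Gamma> ! m)) = k"
    and oth: "\<forall>\<delta>\<in>R. \<delta> \<noteq> - (\<Gamma> ! m) \<and> \<delta> \<noteq> - (- (\<Gamma> ! m)) \<longrightarrow> idx (fa (Suc m)) \<delta> = idx (fa m) \<delta>"
    using edge_data[OF RS E] by blast
  have dnz: "\<delta> \<noteq> 0" using rs_nz[OF RS d] .
  consider "\<Gamma> ! m = \<delta>" | "\<Gamma> ! m = - \<delta>" | "\<Gamma> ! m \<noteq> \<delta> \<and> \<Gamma> ! m \<noteq> - \<delta>" by blast
  then show ?thesis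
  proof cases
    case 1
    have nd: "\<delta> \<noteq> - \<delta>" proof
      assume "\<delta> = - \<delta>" then have "2 *\<^sub>R \<delta> = 0" by (metis add.right_inverse scaleR_2)
      then show False using dnz by simp
    qed
    have a: "idx (fa m) \<delta> = - k" using iA idx_neg[OF RS A d] 1 by simp
    have b: "idx (fa (Suc m)) \<delta> = - k - 1" using iB idx_neg[OF RS B d] 1 by simp
    have "fa (Suc m) = aff_refl \<delta> (of_int (- k)) ` fa m" using Bk 1 by (simp add: aff_refl_neg)
    then show ?thesis using a b 1 nd by (simp add: max_def)
  next
    case 2
    have a: "idx (fa m) \<delta> = k - 1" using iA 2 by simp
    have b: "idx (fa (Suc m)) \<delta> = k" using iB 2 by simp
    have "fa (Suc m) = aff_refl \<delta> (of_int k) ` fa m" using Bk 2 by simp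
    then show ?thesis using a b 2 by (simp add: max_def)
  next
    case 3
    have "idx (fa (Suc m)) \<delta> = idx (fa m) \<delta>" using oth d 3 by (metis minus_minus)
    then show ?thesis using 3 by simp
  qed
qed

lemma fund_idx:
  assumes L: "0 < length \<Gamma>" and d: "\<delta> \<in> pos_roots R S"
  shows "idx (fa 0) \<delta> = 0"
proof -
  have A: "is_alcove R (fa 0)" by (rule chain_alcove[of 0, OF le0 L])
  have dR: "\<delta> \<in> R" using d by (simp add: pos_roots_def)
  obtain x where x: "x \<in> fa 0" using alcove_ne[OF RS A] by blast
  then have "0 < pairing x \<delta>" "pairing x \<delta> < 1" using d by (auto simp: fund_alcove_def)
  then show ?thesis using idx_unique[OF RS A x dR, of 0] by simp
qed

lemma final_idx:
  assumes L: "0 < length \<Gamma>" and d: "\<delta> \<in> pos_roots R S"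
  shows "idx (fa (length \<Gamma>)) \<delta> \<le> 0"
proof -
  have A: "is_alcove R (fa (length \<Gamma>))" using chain_alcove[OF _ L] by simp
  have dR: "\<delta> \<in> R" using d by (simp add: pos_roots_def)
  have fL: "fa (length \<Gamma>) = (\<lambda>\<nu>. \<nu> - lam) ` fund_alcove R S" using LC unfolding lambda_chain_def by blast
  obtain y where y: "y \<in> fa (length \<Gamma>)" using alcove_ne[OF RS A] by blast
  then obtain x where x: "x \<in> fund_alcove R S" "y = x - lam" using fL by blast
  have b: "0 < pairing x \<delta>" "pairing x \<delta> < 1" using d x by (auto simp: fund_alcove_def)
  have "pairing lam \<delta> \<in> \<int>" using DOM dR unfolding dominant_def by blast
  then obtain N where N: "pairing lam \<delta> = of_int N" by (metis Ints_cases)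
  have "pairing lam \<delta> \<ge> 0" using DOM d unfolding dominant_def by blast
  then have N0: "N \<ge> 0" using N by simp
  have "pairing y \<delta> = pairing x \<delta> - of_int N" using x N by (simp add: pairing_diff1)
  then have "idx (fa (length \<Gamma>)) \<delta> = - N" using idx_unique[OF RS A y dR, of "- N"] b by simp
  then show ?thesis using N0 by simp
qed

lemma chain_monotone:
  assumes L: "0 < length \<Gamma>" and d: "\<delta> \<in> pos_roots R S"
  shows "n \<le> length \<Gamma> \<Longrightarrow> idx (fa n) \<delta> = - int (card {j. j < n \<and> \<Gamma> ! j = \<delta>}) \<and> (\<forall>j<n. \<Gamma> ! j \<noteq> - \<delta>)"
proof (induction n rule: less_induct)
  case (less n)
  have dR: "\<delta> \<in> R" using d by (simp add: pos_roots_def)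
  show ?case
  proof (cases n)
    case 0 then show ?thesis using fund_idx[OF L d] by simp
  next
    case (Suc n0)
    have n0: "n0 < length \<Gamma>" using less.prems Suc by simp
    have IH: "idx (fa n0) \<delta> = - int (card {j. j < n0 \<and> \<Gamma> ! j = \<delta>})" "\<forall>j<n0. \<Gamma> ! j \<noteq> - \<delta>"
      using less.IH[of n0] Suc less.prems by auto
    have st: "idx (fa (Suc n0)) \<delta> = idx (fa n0) \<delta> + (if \<Gamma> ! n0 = - \<delta> then 1 else if \<Gamma> ! n0 = \<delta> then -1 else 0)"
      "(\<Gamma> ! n0 = \<delta> \<or> \<Gamma> ! n0 = - \<delta>) \<longrightarrow>
          fa (Suc n0) = aff_refl \<delta> (of_int (max (idx (fa n0) \<delta>) (idx (fa (Suc n0)) \<delta>))) ` fa n0"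
      using chain_step[OF n0 dR] by blast+
    have dnz: "\<delta> \<noteq> 0" using rs_nz[OF RS dR] .
    have nd: "\<delta> \<noteq> - \<delta>" proof
      assume "\<delta> = - \<delta>" then have "2 *\<^sub>R \<delta> = 0" by (metis add.right_inverse scaleR_2)
      then show False using dnz by simp
    qed
    have notneg: "\<Gamma> ! n0 \<noteq> - \<delta>"
    proof
      assume e: "\<Gamma> ! n0 = - \<delta>"
      define dd where "dd = card {j. j < n0 \<and> \<Gamma> ! j = \<delta>}"
      have i0: "idx (fa n0) \<delta> = - int dd" using IH dd_def by simp
      have i1: "idx (fa (Suc n0)) \<delta> = - int dd + 1" using st(1) e i0 by simp
      have cr: "fa (Suc n0) = aff_refl \<delta> (of_int (- int dd + 1)) ` fa n0" using st(2) e i0 i1 by (simp add: max_def)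
      show False
      proof (cases "dd = 0")
        case False
        define Jd where "Jd = {j. j < n0 \<and> \<Gamma> ! j = \<delta>}"
        have fin: "finite Jd" by (simp add: Jd_def)
        have ne: "Jd \<noteq> {}" using False dd_def Jd_def by auto
        define j0 where "j0 = Max Jd"
        have j0: "j0 \<in> Jd" using fin ne by (simp add: j0_def)
        have j0n: "j0 < n0" "\<Gamma> ! j0 = \<delta>" using j0 by (auto simp: Jd_def)
        have ins: "Jd = insert j0 {j. j < j0 \<and> \<Gamma> ! j = \<delta>}"
        proof
          show "Jd \<subseteq> insert j0 {j. j < j0 \<and> \<Gamma> ! j = \<delta>}"
          proof
            fix x assume x: "x \<in> Jd"
            then have "x \<le> j0" unfolding j0_def by (rule Max_ge[OF fin])
            then show "x \<in> insert j0 {j. j < j0 \<and> \<Gamma> ! j = \<delta>}" using x by (auto simp: Jd_def)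
          qed
          show "insert j0 {j. j < j0 \<and> \<Gamma> ! j = \<delta>} \<subseteq> Jd" using j0 j0n by (auto simp: Jd_def)
        qed
        have "card Jd = Suc (card {j. j < j0 \<and> \<Gamma> ! j = \<delta>})" using ins by simp
        then have cj0: "card {j. j < j0 \<and> \<Gamma> ! j = \<delta>} = dd - 1" using dd_def Jd_def by simp
        have IHj: "idx (fa j0) \<delta> = - int (card {j. j < j0 \<and> \<Gamma> ! j = \<delta>})"
          using less.IH[of j0] j0n Suc less.prems by auto
        have j0L: "j0 < length \<Gamma>" using j0n n0 by simp
        have stj: "idx (fa (Suc j0)) \<delta> = idx (fa j0) \<delta> - 1"
          "fa (Suc j0) = aff_refl \<delta> (of_int (max (idx (fa j0) \<delta>) (idx (fa (Suc j0)) \<delta>))) ` fa j0"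
          using chain_step[OF j0L dR] j0n(2) nd by auto
        have "max (idx (fa j0) \<delta>) (idx (fa (Suc j0)) \<delta>) = - int dd + 1" using stj(1) IHj cj0 False by (simp add: max_def)
        then have "fa (Suc j0) = aff_refl \<delta> (of_int (- int dd + 1)) ` fa j0" using stj(2) by simp
        then show False using chain_no_double[OF RS LC j0n(1) n0 dR _ cr] by blast
      next
        case True
        let ?a = "\<lambda>m. idx (fa m) \<delta>"
        have stp: "\<forall>m. Suc n0 \<le> m \<and> m < length \<Gamma> \<longrightarrow> ?a (Suc m) \<ge> ?a m - 1"
          using chain_step[OF _ dR] by fastforce
        have as: "?a (Suc n0) \<ge> 1" using i1 True by simp
        have ae: "?a (length \<Gamma>) \<le> 0" by (rule final_idx[OF L d])
        obtain m where m: "Suc n0 \<le> m" "m < length \<Gamma>" "?a m \<ge> 1" "?a (Suc m) \<le> 0" "?a (Suc m) \<ge> ?a m - 1"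
          using discrete_ivt[OF stp as ae] n0 by auto
        have stm: "idx (fa (Suc m)) \<delta> = idx (fa m) \<delta> + (if \<Gamma> ! m = - \<delta> then 1 else if \<Gamma> ! m = \<delta> then -1 else 0)"
          "(\<Gamma> ! m = \<delta> \<or> \<Gamma> ! m = - \<delta>) \<longrightarrow>
            fa (Suc m) = aff_refl \<delta> (of_int (max (idx (fa m) \<delta>) (idx (fa (Suc m)) \<delta>))) ` fa m"
          using chain_step[OF m(2) dR] by blast+
        have "\<Gamma> ! m = \<delta>" using stm(1) m(3,4) by (auto split: if_splits)
        then have "?a m = 1" "?a (Suc m) = 0" using stm(1) m(3,4) nd by auto
        then have "fa (Suc m) = aff_refl \<delta> (of_int (- int dd + 1)) ` fa m" using stm(2) \<open>\<Gamma> ! m = \<delta>\<close> True by simp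
        moreover have "n0 < m" using m by simp
        ultimately show False using chain_no_double[OF RS LC \<open>n0 < m\<close> m(2) dR cr] by blast
      qed
    qed
    have cnt: "{j. j < Suc n0 \<and> \<Gamma> ! j = \<delta>} = (if \<Gamma> ! n0 = \<delta> then insert n0 {j. j < n0 \<and> \<Gamma> ! j = \<delta>} else {j. j < n0 \<and> \<Gamma> ! j = \<delta>})"
      by (auto simp: less_Suc_eq)
    show ?thesis
    proof (intro conjI)
      show "idx (fa n) \<delta> = - int (card {j. j < n \<and> \<Gamma> ! j = \<delta>})"
        using st(1) IH(1) notneg cnt Suc by (simp split: if_splits)
      show "\<forall>j<n. \<Gamma> ! j \<noteq> - \<delta>" using IH(2) notneg Suc by (auto simp: less_Suc_eq)
    qed
  qed
qed

end


definition phi :: "'a::euclidean_space set \<Rightarrow> 'a \<Rightarrow> real" where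
  "phi S x = (\<Sum>s\<in>S. representation S x s)"

context
  fixes R S :: "'a::euclidean_space set"
  assumes RS: "root_system R" and BS: "is_base R S"
begin

lemma S_indep: "independent S" using BS by (simp add: is_base_def)
lemma S_fin: "finite S" using S_indep by (rule finiteI_independent)
lemma S_sub: "S \<subseteq> R" using BS by (simp add: is_base_def)

lemma root_comb: "\<beta> \<in> R \<Longrightarrow> \<exists>c. ((\<forall>\<alpha>\<in>S. c \<alpha> \<ge> 0) \<or> (\<forall>\<alpha>\<in>S. c \<alpha> \<le> 0)) \<and> \<beta> = (\<Sum>\<alpha>\<in>S. c \<alpha> *\<^sub>R \<alpha>)"
  using BS unfolding is_base_def by blast

lemma span_S: "x \<in> span S"
proof -
  have "R \<subseteq> span S"
  proof
    fix \<beta> assume "\<beta> \<in> R"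
    then obtain c where "\<beta> = (\<Sum>\<alpha>\<in>S. c \<alpha> *\<^sub>R \<alpha>)" using root_comb by blast
    then show "\<beta> \<in> span S" by (simp add: span_sum span_scale span_base)
  qed
  then have "span R \<subseteq> span S" by (simp add: span_minimal)
  moreover have "span R = UNIV" using RS by (simp add: root_system_def)
  ultimately show ?thesis by auto
qed

lemma phi_add: "phi S (x + y) = phi S x + phi S y"
proof -
  have "representation S (x + y) = (\<lambda>b. representation S x b + representation S y b)"
    by (rule representation_add[OF S_indep span_S span_S])
  then show ?thesis unfolding phi_def by (simp add: sum.distrib)
qed
lemma phi_scale: "phi S (c *\<^sub>R x) = c * phi S x"
proof -
  have "representation S (c *\<^sub>R x) = (\<lambda>b. c * representation S x b)"
    by (rule representation_scale[OF S_indep span_S])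
  then show ?thesis unfolding phi_def by (simp add: sum_distrib_left)
qed
lemma phi_neg: "phi S (- x) = - phi S x"
  using phi_scale[of "-1" x] by simp
lemma phi_diff: "phi S (x - y) = phi S x - phi S y"
  using phi_add[of x "- y"] phi_neg[of y] by simp

lemma phi_comb:
  "phi S (\<Sum>\<alpha>\<in>S. c \<alpha> *\<^sub>R \<alpha>) = (\<Sum>\<alpha>\<in>S. c \<alpha>)"
proof -
  have r1: "representation S (\<Sum>\<alpha>\<in>S. c \<alpha> *\<^sub>R \<alpha>) = (\<lambda>b. \<Sum>\<alpha>\<in>S. representation S (c \<alpha> *\<^sub>R \<alpha>) b)"
    by (rule representation_sum[OF S_indep span_S])
  have r2: "representation S (c \<alpha> *\<^sub>R \<alpha>) b = c \<alpha> * (if b = \<alpha> then 1 else 0)" if "\<alpha> \<in> S" for \<alpha> b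
  proof -
    have "representation S (c \<alpha> *\<^sub>R \<alpha>) = (\<lambda>b. c \<alpha> * representation S \<alpha> b)"
      by (rule representation_scale[OF S_indep span_S])
    moreover have "representation S \<alpha> = (\<lambda>v. if v = \<alpha> then 1 else 0)"
      by (rule representation_basis[OF S_indep that])
    ultimately show ?thesis by simp
  qed
  have r3: "representation S (\<Sum>\<alpha>\<in>S. c \<alpha> *\<^sub>R \<alpha>) b = c b" if "b \<in> S" for b
  proof -
    have "representation S (\<Sum>\<alpha>\<in>S. c \<alpha> *\<^sub>R \<alpha>) b = (\<Sum>\<alpha>\<in>S. c \<alpha> * (if b = \<alpha> then 1 else 0))"
      unfolding r1 using r2 by (intro sum.cong) auto
    also have "\<dots> = (\<Sum>\<alpha>\<in>S. (if b = \<alpha> then c \<alpha> else 0))" by (intro sum.cong) auto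
    also have "\<dots> = c b" using that S_fin by (simp add: sum.delta)
    finally show ?thesis .
  qed
  show ?thesis unfolding phi_def using r3 by (intro sum.cong) auto
qed

lemma phi_pos: assumes "\<gamma> \<in> pos_roots R S" shows "phi S \<gamma> > 0"
proof -
  have g: "\<gamma> \<in> R" "nonneg_comb S \<gamma>" using assms by (auto simp: pos_roots_def)
  obtain c where c: "\<forall>\<alpha>\<in>S. c \<alpha> \<ge> 0" "\<gamma> = (\<Sum>\<alpha>\<in>S. c \<alpha> *\<^sub>R \<alpha>)" using g(2) by (auto simp: nonneg_comb_def)
  have p: "phi S \<gamma> = (\<Sum>\<alpha>\<in>S. c \<alpha>)" unfolding c(2) by (rule phi_comb)
  have "(\<Sum>\<alpha>\<in>S. c \<alpha>) \<ge> 0" using c(1) by (simp add: sum_nonneg)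
  moreover have "(\<Sum>\<alpha>\<in>S. c \<alpha>) \<noteq> 0"
  proof
    assume "(\<Sum>\<alpha>\<in>S. c \<alpha>) = 0"
    then have "\<forall>\<alpha>\<in>S. c \<alpha> = 0" using sum_nonneg_eq_0_iff[OF S_fin] c(1) by blast
    then have "\<gamma> = 0" unfolding c(2) by simp
    then show False using rs_nz[OF RS g(1)] by simp
  qed
  ultimately show ?thesis using p by simp
qed

lemma pos_or_neg: assumes "\<gamma> \<in> R" shows "\<gamma> \<in> pos_roots R S \<or> - \<gamma> \<in> pos_roots R S"
proof -
  obtain c where c1: "(\<forall>\<alpha>\<in>S. c \<alpha> \<ge> 0) \<or> (\<forall>\<alpha>\<in>S. c \<alpha> \<le> 0)" and c2: "\<gamma> = (\<Sum>\<alpha>\<in>S. c \<alpha> *\<^sub>R \<alpha>)"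
    using root_comb[OF assms] by blast
  have n: "- \<gamma> \<in> R" using rs_neg[OF RS assms] .
  show ?thesis
  proof (cases "\<forall>\<alpha>\<in>S. c \<alpha> \<ge> 0")
    case True
    then have "nonneg_comb S \<gamma>" unfolding nonneg_comb_def using c2 by (intro exI[of _ c]) simp
    then show ?thesis using assms by (simp add: pos_roots_def)
  next
    case False
    then have "\<forall>\<alpha>\<in>S. c \<alpha> \<le> 0" using c1 by blast
    then have h1: "\<forall>\<alpha>\<in>S. (- c \<alpha>) \<ge> 0" by simp
    have h2: "- \<gamma> = (\<Sum>\<alpha>\<in>S. (- c \<alpha>) *\<^sub>R \<alpha>)" unfolding c2 scaleR_minus_left sum_negf ..
    have "nonneg_comb S (- \<gamma>)" unfolding nonneg_comb_def using h1 h2 by (intro exI[of _ "\<lambda>a. - c a"]) simp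
    then show ?thesis using n by (simp add: pos_roots_def)
  qed
qed

lemma pos_not_neg: "\<gamma> \<in> pos_roots R S \<Longrightarrow> - \<gamma> \<notin> pos_roots R S"
  using phi_pos[of \<gamma>] phi_pos[of "- \<gamma>"] phi_neg[of \<gamma>] by auto

lemma pos_R: "\<gamma> \<in> pos_roots R S \<Longrightarrow> \<gamma> \<in> R" by (simp add: pos_roots_def)

end


definition indep2 :: "'a::real_vector \<Rightarrow> 'a \<Rightarrow> bool" where
  "indep2 A B \<longleftrightarrow> (\<forall>c d. c *\<^sub>R A + d *\<^sub>R B = 0 \<longrightarrow> c = 0 \<and> d = 0)"

lemma indep2_swap: "indep2 A B \<Longrightarrow> indep2 B A"
  unfolding indep2_def by (metis add.commute)

lemma indep2_unique:
  assumes "indep2 A B" "x1 *\<^sub>R A + y1 *\<^sub>R B = x2 *\<^sub>R A + y2 *\<^sub>R B"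
  shows "x1 = x2 \<and> y1 = y2"
proof -
  have "(x1 - x2) *\<^sub>R A + (y1 - y2) *\<^sub>R B = 0" using assms(2) by (simp add: algebra_simps)
  then show ?thesis using assms(1) unfolding indep2_def by fastforce
qed

lemma two_span: "x \<in> span {a, b} \<Longrightarrow> \<exists>c d. x = c *\<^sub>R a + d *\<^sub>R b"
proof -
  assume "x \<in> span {a, b}"
  then obtain k where "x - k *\<^sub>R a \<in> span {b}" by (auto simp: span_insert)
  then obtain k' where "x - k *\<^sub>R a = k' *\<^sub>R b" by (auto simp: span_singleton)
  then have "x = k *\<^sub>R a + k' *\<^sub>R b" by (simp add: algebra_simps)
  then show ?thesis by blast
qed

lemma coroot_scale_pos: "\<alpha> \<noteq> 0 \<Longrightarrow> coroot \<alpha> = (2 / (\<alpha> \<bullet> \<alpha>)) *\<^sub>R \<alpha> \<and> 2 / (\<alpha> \<bullet> \<alpha>) > 0"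
  by (simp add: coroot_def)

context
  fixes R S R' :: "'a::euclidean_space set"
  assumes RS: "root_system R" and BS: "is_base R S"
    and SUB: "root_subsystem R R'" and D2: "dim R' = 2"
begin

lemma R'_R: "R' \<subseteq> R" using SUB by (simp add: root_subsystem_def)
lemma R'_refl: "\<alpha> \<in> R' \<Longrightarrow> \<beta> \<in> R' \<Longrightarrow> refl \<alpha> \<beta> \<in> R'" using SUB by (simp add: root_subsystem_def)
lemma R'_ne: "R' \<noteq> {}" using SUB by (simp add: root_subsystem_def)
lemma R'_neg: "\<alpha> \<in> R' \<Longrightarrow> - \<alpha> \<in> R'"
  using R'_refl[of \<alpha> \<alpha>] refl_self[OF rs_nz[OF RS]] R'_R by auto
lemma R'_nz: "\<alpha> \<in> R' \<Longrightarrow> \<alpha> \<noteq> 0" using R'_R rs_nz[OF RS] by auto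

lemma R'_sign: "\<delta> \<in> R' \<Longrightarrow> \<delta> \<in> R' \<inter> pos_roots R S \<or> - \<delta> \<in> R' \<inter> pos_roots R S"
  using pos_or_neg[OF RS BS, of \<delta>] R'_R R'_neg by auto

lemma phi_coroot_pos: "\<gamma> \<in> pos_roots R S \<Longrightarrow> phi S (coroot \<gamma>) > 0"
proof -
  assume g: "\<gamma> \<in> pos_roots R S"
  have "\<gamma> \<noteq> 0" using rs_nz[OF RS pos_R[OF RS BS g]] .
  then have "coroot \<gamma> = (2 / (\<gamma> \<bullet> \<gamma>)) *\<^sub>R \<gamma>" "2 / (\<gamma> \<bullet> \<gamma>) > 0" using coroot_scale_pos by blast+
  then show ?thesis using phi_scale[OF RS BS] phi_pos[OF RS BS g] by simp
qed

lemma two_indep: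
  "\<exists>\<alpha>0 \<beta>0. \<alpha>0 \<in> R' \<inter> pos_roots R S \<and> \<beta>0 \<in> R' \<inter> pos_roots R S \<and> indep2 (coroot \<alpha>0) (coroot \<beta>0) \<and>
     (\<forall>\<delta>\<in>R'. coroot \<delta> \<in> span {coroot \<alpha>0, coroot \<beta>0})"
proof -
  let ?P = "R' \<inter> pos_roots R S"
  obtain \<delta>0 where "\<delta>0 \<in> R'" using R'_ne by blast
  then obtain \<alpha>0 where a0: "\<alpha>0 \<in> ?P" using R'_sign by blast
  have a0nz: "\<alpha>0 \<noteq> 0" using a0 R'_nz by blast
  have "\<exists>\<beta>0\<in>?P. \<beta>0 \<notin> span {\<alpha>0}"
  proof (rule ccontr)
    assume "\<not> ?thesis"
    then have allP: "\<forall>\<gamma>\<in>?P. \<gamma> \<in> span {\<alpha>0}" by blast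
    have "R' \<subseteq> span {\<alpha>0}"
    proof
      fix \<delta> assume d: "\<delta> \<in> R'"
      show "\<delta> \<in> span {\<alpha>0}"
        using R'_sign[OF d] allP by (metis minus_minus span_neg)
    qed
    then have "dim R' \<le> dim (span {\<alpha>0})" by (rule dim_subset)
    also have "\<dots> \<le> 1" by simp
    finally show False using D2 by simp
  qed
  then obtain \<beta>0 where b0: "\<beta>0 \<in> ?P" "\<beta>0 \<notin> span {\<alpha>0}" by blast
  have b0nz: "\<beta>0 \<noteq> 0" using b0 R'_nz by blast
  have ind: "indep2 (coroot \<alpha>0) (coroot \<beta>0)"
    unfolding indep2_def
  proof (intro allI impI)
    fix c d assume e: "c *\<^sub>R coroot \<alpha>0 + d *\<^sub>R coroot \<beta>0 = 0"
    have ca: "coroot \<alpha>0 = (2 / (\<alpha>0 \<bullet> \<alpha>0)) *\<^sub>R \<alpha>0" "coroot \<beta>0 = (2 / (\<beta>0 \<bullet> \<beta>0)) *\<^sub>R \<beta>0"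
      by (simp_all add: coroot_def)
    have pa: "\<alpha>0 \<bullet> \<alpha>0 > 0" "\<beta>0 \<bullet> \<beta>0 > 0" using a0nz b0nz by auto
    have d0: "d = 0"
    proof (rule ccontr)
      assume dn: "d \<noteq> 0"
      have "(d * (2 / (\<beta>0 \<bullet> \<beta>0))) *\<^sub>R \<beta>0 = - (c * (2 / (\<alpha>0 \<bullet> \<alpha>0))) *\<^sub>R \<alpha>0"
        using e ca by (simp add: algebra_simps eq_neg_iff_add_eq_0)
      moreover have tn: "d * (2 / (\<beta>0 \<bullet> \<beta>0)) \<noteq> 0" using dn pa by simp
      ultimately have "(1 / (d * (2 / (\<beta>0 \<bullet> \<beta>0)))) *\<^sub>R ((d * (2 / (\<beta>0 \<bullet> \<beta>0))) *\<^sub>R \<beta>0)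
          = (1 / (d * (2 / (\<beta>0 \<bullet> \<beta>0)))) *\<^sub>R ((- (c * (2 / (\<alpha>0 \<bullet> \<alpha>0))) *\<^sub>R \<alpha>0))" by simp
      then have eqb: "\<beta>0 = ((1 / (d * (2 / (\<beta>0 \<bullet> \<beta>0)))) * (- (c * (2 / (\<alpha>0 \<bullet> \<alpha>0))))) *\<^sub>R \<alpha>0"
        using tn by simp
      have "((1 / (d * (2 / (\<beta>0 \<bullet> \<beta>0)))) * (- (c * (2 / (\<alpha>0 \<bullet> \<alpha>0))))) *\<^sub>R \<alpha>0 \<in> span {\<alpha>0}"
        by (rule span_scale[OF span_base]) simp
      then show False using eqb b0(2) by simp
    qed
    then have "c *\<^sub>R coroot \<alpha>0 = 0" using e by simp
    moreover have "coroot \<alpha>0 \<noteq> 0" using a0nz by (simp add: coroot_def)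
    ultimately have "c = 0" by simp
    then show "c = 0 \<and> d = 0" using d0 by simp
  qed
  have sp: "span {\<alpha>0, \<beta>0} = span R'"
  proof (rule dim_eq_span)
    show "{\<alpha>0, \<beta>0} \<subseteq> R'" using a0 b0 by auto
    have "independent {\<alpha>0}" using a0nz by (simp add: independent_insert)
    then have "independent (insert \<beta>0 {\<alpha>0})" by (rule independent_insertI[OF b0(2)])
    then have "independent {\<alpha>0, \<beta>0}" by (simp add: insert_commute)
    moreover have "\<alpha>0 \<noteq> \<beta>0" using b0(2) by (metis span_base singletonI)
    ultimately have "dim {\<alpha>0, \<beta>0} = 2" by (simp add: dim_eq_card_independent)
    then show "dim R' \<le> dim {\<alpha>0, \<beta>0}" using D2 by simp
  qed
  have allsp: "\<forall>\<delta>\<in>R'. coroot \<delta> \<in> span {coroot \<alpha>0, coroot \<beta>0}"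
  proof
    fix \<delta> assume d: "\<delta> \<in> R'"
    then have "\<delta> \<in> span {\<alpha>0, \<beta>0}" using sp by (simp add: span_base)
    then obtain k1 k2 where k: "\<delta> = k1 *\<^sub>R \<alpha>0 + k2 *\<^sub>R \<beta>0" using two_span by blast
    have "coroot \<delta> = (2 / (\<delta> \<bullet> \<delta>) * k1 * ((\<alpha>0 \<bullet> \<alpha>0) / 2)) *\<^sub>R coroot \<alpha>0 + (2 / (\<delta> \<bullet> \<delta>) * k2 * ((\<beta>0 \<bullet> \<beta>0) / 2)) *\<^sub>R coroot \<beta>0"
      using a0nz b0nz unfolding coroot_def k by (simp add: algebra_simps)
    then show "coroot \<delta> \<in> span {coroot \<alpha>0, coroot \<beta>0}"
      by (simp add: span_add span_scale span_base)
  qed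
  show ?thesis using a0 b0 ind allsp by blast
qed


lemma R'_cone:
  "\<exists>\<alpha>1 \<beta>1. \<alpha>1 \<in> R' \<inter> pos_roots R S \<and> \<beta>1 \<in> R' \<inter> pos_roots R S \<and> indep2 (coroot \<alpha>1) (coroot \<beta>1) \<and>
     (\<forall>\<gamma>\<in>R' \<inter> pos_roots R S. \<exists>x y. x \<ge> 0 \<and> y \<ge> 0 \<and> coroot \<gamma> = x *\<^sub>R coroot \<alpha>1 + y *\<^sub>R coroot \<beta>1)"
proof -
  let ?P = "R' \<inter> pos_roots R S"
  obtain \<alpha>0 \<beta>0 where a0: "\<alpha>0 \<in> ?P" and b0: "\<beta>0 \<in> ?P" and ind0: "indep2 (coroot \<alpha>0) (coroot \<beta>0)"
    and allsp: "\<forall>\<delta>\<in>R'. coroot \<delta> \<in> span {coroot \<alpha>0, coroot \<beta>0}"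
    using two_indep by blast
  define A where "A = coroot \<alpha>0"
  define B where "B = coroot \<beta>0"
  define t where "t = (B \<bullet> A) / (A \<bullet> A)"
  define w where "w = B - t *\<^sub>R A"
  have Anz: "A \<noteq> 0" using R'_nz a0 by (auto simp: A_def coroot_def)
  then have AA: "A \<bullet> A \<noteq> 0" by simp
  have Aw: "A \<bullet> w = 0" using AA by (simp add: w_def t_def inner_diff_right inner_commute)
  have wnz: "w \<noteq> 0"
  proof
    assume "w = 0"
    then have "(- t) *\<^sub>R A + 1 *\<^sub>R B = 0" by (simp add: w_def)
    then show False using ind0 unfolding indep2_def A_def B_def by fastforce
  qed
  have Bw: "B \<bullet> w = w \<bullet> w"
  proof -
    have "w \<bullet> w = B \<bullet> w - t * (A \<bullet> w)" by (simp add: w_def inner_diff_left)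
    then show ?thesis using Aw by simp
  qed
  have Bwp: "B \<bullet> w > 0" using Bw wnz by simp
  define \<psi> where "\<psi> x = x \<bullet> w" for x
  define \<phi> where "\<phi> x = phi S x" for x
  have \<phi>lin: "\<phi> (a *\<^sub>R x + b *\<^sub>R y) = a * \<phi> x + b * \<phi> y" for a b x y
    using phi_add[OF RS BS] phi_scale[OF RS BS] by (simp add: \<phi>_def)
  have \<phi>diff: "\<phi> (x - y) = \<phi> x - \<phi> y" for x y using phi_diff[OF RS BS] by (simp add: \<phi>_def)
  have \<psi>diff: "\<psi> (x - y) = \<psi> x - \<psi> y" for x y by (simp add: \<psi>_def inner_diff_left)
  have \<psi>lin: "\<psi> (a *\<^sub>R x + b *\<^sub>R y) = a * \<psi> x + b * \<psi> y" for a b x y by (simp add: \<psi>_def inner_add_left)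
  have \<phi>A: "\<phi> A > 0" "\<phi> B > 0" using phi_coroot_pos a0 b0 by (auto simp: \<phi>_def A_def B_def)
  have zero: "v = 0" if vs: "v \<in> span {A, B}" and vp: "\<phi> v = 0" and vq: "\<psi> v = 0" for v
  proof -
    obtain a b where v: "v = a *\<^sub>R A + b *\<^sub>R B" using two_span[OF vs] by blast
    have "\<psi> v = b * (B \<bullet> w)" using v Aw by (simp add: \<psi>lin) (simp add: \<psi>_def)
    then have b: "b = 0" using vq Bwp by simp
    have "\<phi> v = a * \<phi> A" using v b \<phi>lin[of a A 0 B] by simp
    then have "a = 0" using vp \<phi>A by simp
    then show ?thesis using v b by simp
  qed
  have insp: "coroot \<delta> \<in> span {A, B}" if "\<delta> \<in> R'" for \<delta> using allsp that by (simp add: A_def B_def)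
  define s where "s \<gamma> = \<psi> (coroot \<gamma>) / \<phi> (coroot \<gamma>)" for \<gamma>
  have Lpos: "\<phi> (coroot \<gamma>) > 0" if "\<gamma> \<in> ?P" for \<gamma> using phi_coroot_pos that by (simp add: \<phi>_def)
  have \<psi>s: "\<psi> (coroot \<gamma>) = s \<gamma> * \<phi> (coroot \<gamma>)" if "\<gamma> \<in> ?P" for \<gamma> using Lpos[OF that] by (simp add: s_def)
  have finP: "finite ?P" using rs_finite[OF RS] R'_R by (meson finite_Int finite_subset)
  have neP: "?P \<noteq> {}" using a0 by blast
  obtain \<alpha>1 where a1: "\<alpha>1 \<in> ?P" "\<forall>\<gamma>\<in>?P. s \<alpha>1 \<le> s \<gamma>"
  proof -
    have "Min (s ` ?P) \<in> s ` ?P" using finP neP by simp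
    then obtain \<alpha>1 where "\<alpha>1 \<in> ?P" "s \<alpha>1 = Min (s ` ?P)" by auto
    moreover have "\<forall>\<gamma>\<in>?P. Min (s ` ?P) \<le> s \<gamma>" using finP by simp
    ultimately show ?thesis using that by metis
  qed
  obtain \<beta>1 where b1: "\<beta>1 \<in> ?P" "\<forall>\<gamma>\<in>?P. s \<gamma> \<le> s \<beta>1"
  proof -
    have "Max (s ` ?P) \<in> s ` ?P" using finP neP by simp
    then obtain \<beta>1 where "\<beta>1 \<in> ?P" "s \<beta>1 = Max (s ` ?P)" by auto
    moreover have "\<forall>\<gamma>\<in>?P. s \<gamma> \<le> Max (s ` ?P)" using finP by simp
    ultimately show ?thesis using that by metis
  qed
  have sa0: "s \<alpha>0 = 0" using Aw by (simp add: s_def \<psi>_def A_def inner_commute)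
  have sb0: "s \<beta>0 > 0" using Bwp \<phi>A by (simp add: s_def \<psi>_def B_def)
  have "s \<alpha>1 \<le> s \<alpha>0" "s \<beta>0 \<le> s \<beta>1" using a1(2) b1(2) a0 b0 by blast+
  then have s12: "s \<alpha>1 < s \<beta>1" using sa0 sb0 by linarith
  define u1 where "u1 = coroot \<alpha>1"
  define u2 where "u2 = coroot \<beta>1"
  have L1: "\<phi> u1 > 0" using Lpos[OF a1(1)] by (simp add: u1_def)
  have L2: "\<phi> u2 > 0" using Lpos[OF b1(1)] by (simp add: u2_def)
  have \<psi>1: "\<psi> u1 = s \<alpha>1 * \<phi> u1" using \<psi>s[OF a1(1)] by (simp add: u1_def)
  have \<psi>2: "\<psi> u2 = s \<beta>1 * \<phi> u2" using \<psi>s[OF b1(1)] by (simp add: u2_def)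
  have ind: "indep2 u1 u2"
    unfolding indep2_def
  proof (intro allI impI)
    fix x y assume e: "x *\<^sub>R u1 + y *\<^sub>R u2 = 0"
    have p0: "phi S 0 = 0" using phi_scale[OF RS BS, of 0 0] by simp
    have e1: "x * \<phi> u1 + y * \<phi> u2 = 0" using \<phi>lin[of x u1 y u2] e p0 by (simp add: \<phi>_def)
    have "\<psi> (x *\<^sub>R u1 + y *\<^sub>R u2) = 0" using e by (simp add: \<psi>_def)
    then have e2: "x * (s \<alpha>1 * \<phi> u1) + y * (s \<beta>1 * \<phi> u2) = 0" using \<psi>lin[of x u1 y u2] \<psi>1 \<psi>2 by simp
    have "y * \<phi> u2 * (s \<beta>1 - s \<alpha>1) = 0" using e1 e2 by algebra
    then have y: "y = 0" using L2 s12 by simp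
    then have "x = 0" using e1 L1 by simp
    then show "x = 0 \<and> y = 0" using y by simp
  qed
  have cone: "\<exists>x y. x \<ge> 0 \<and> y \<ge> 0 \<and> coroot \<gamma> = x *\<^sub>R u1 + y *\<^sub>R u2" if g: "\<gamma> \<in> ?P" for \<gamma>
  proof -
    define L where "L = \<phi> (coroot \<gamma>)"
    have Lp: "L > 0" using Lpos[OF g] by (simp add: L_def)
    define x where "x = L * (s \<beta>1 - s \<gamma>) / (\<phi> u1 * (s \<beta>1 - s \<alpha>1))"
    define y where "y = L * (s \<gamma> - s \<alpha>1) / (\<phi> u2 * (s \<beta>1 - s \<alpha>1))"
    have x0: "x \<ge> 0" using Lp L1 s12 b1(2) g by (simp add: x_def)
    have y0: "y \<ge> 0" using Lp L2 s12 a1(2) g by (simp add: y_def)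
    define dv where "dv = coroot \<gamma> - (x *\<^sub>R u1 + y *\<^sub>R u2)"
    have dsp: "dv \<in> span {A, B}" unfolding dv_def u1_def u2_def
      using insp g a1(1) b1(1) by (intro span_diff span_add span_scale) auto
    define D where "D = s \<beta>1 - s \<alpha>1"
    have Dp: "D > 0" using s12 by (simp add: D_def)
    have xp: "x * \<phi> u1 = L * (s \<beta>1 - s \<gamma>) / D" using L1 by (simp add: x_def D_def)
    have yp: "y * \<phi> u2 = L * (s \<gamma> - s \<alpha>1) / D" using L2 by (simp add: y_def D_def)
    have "\<phi> dv = L - (x * \<phi> u1 + y * \<phi> u2)" by (simp add: dv_def \<phi>diff \<phi>lin L_def)
    also have "\<dots> = L - (L * (s \<beta>1 - s \<gamma>) / D + L * (s \<gamma> - s \<alpha>1) / D)" using xp yp by simp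
    also have "\<dots> = L - L * ((s \<beta>1 - s \<gamma>) + (s \<gamma> - s \<alpha>1)) / D" by (simp add: add_divide_distrib[symmetric] algebra_simps)
    also have "\<dots> = 0" using Dp by (simp add: D_def)
    finally have d1: "\<phi> dv = 0" .
    have "\<psi> dv = s \<gamma> * L - (s \<alpha>1 * (x * \<phi> u1) + s \<beta>1 * (y * \<phi> u2))"
      by (simp add: dv_def \<psi>diff \<psi>lin \<psi>1 \<psi>2 \<psi>s[OF g] L_def algebra_simps)
    also have "\<dots> = s \<gamma> * L - (s \<alpha>1 * (L * (s \<beta>1 - s \<gamma>)) + s \<beta>1 * (L * (s \<gamma> - s \<alpha>1))) / D"
      using xp yp by (simp add: add_divide_distrib)
    also have "s \<alpha>1 * (L * (s \<beta>1 - s \<gamma>)) + s \<beta>1 * (L * (s \<gamma> - s \<alpha>1)) = s \<gamma> * L * D"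
      by (simp add: D_def algebra_simps)
    also have "s \<gamma> * L - s \<gamma> * L * D / D = 0" using Dp by simp
    finally have d2: "\<psi> dv = 0" .
    have "dv = 0" by (rule zero[OF dsp d1 d2])
    then show ?thesis using x0 y0 by (auto simp: dv_def)
  qed
  show ?thesis using a1(1) b1(1) ind cone unfolding u1_def u2_def by blast
qed

end


lemma pairing_sign: assumes "\<alpha> \<noteq> 0" "\<beta> \<noteq> 0" shows "pairing \<alpha> \<beta> > 0 \<longleftrightarrow> pairing \<beta> \<alpha> > 0"
proof -
  have "\<not> \<alpha> \<bullet> \<alpha> < 0" "\<not> \<beta> \<bullet> \<beta> < 0" using assms by (simp_all add: not_less)
  then show ?thesis using assms by (simp add: pairing_def coroot_def inner_commute zero_less_divide_iff)
qed

lemma coroot_refl_formula: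
  assumes "\<alpha> \<noteq> 0"
  shows "refl \<alpha> v = v - (v \<bullet> \<alpha>) *\<^sub>R coroot \<alpha>"
  by (simp add: refl_def pairing_def coroot_def)

context
  fixes R S R' :: "'a::euclidean_space set"
  assumes RS: "root_system R" and BS: "is_base R S"
    and SUB: "root_subsystem R R'" and D2: "dim R' = 2"
begin

lemma descent_step:
  assumes a1: "\<alpha>1 \<in> R' \<inter> pos_roots R S" and b1: "\<beta>1 \<in> R' \<inter> pos_roots R S"
    and ind: "indep2 (coroot \<alpha>1) (coroot \<beta>1)"
    and cone: "\<forall>\<gamma>\<in>R' \<inter> pos_roots R S. \<exists>x y. x \<ge> 0 \<and> y \<ge> 0 \<and> coroot \<gamma> = x *\<^sub>R coroot \<alpha>1 + y *\<^sub>R coroot \<beta>1"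
    and g: "\<gamma> \<in> R' \<inter> pos_roots R S" and xy: "x \<ge> 0" "y \<ge> 0" "coroot \<gamma> = x *\<^sub>R coroot \<alpha>1 + y *\<^sub>R coroot \<beta>1"
    and ne: "\<gamma> \<noteq> \<alpha>1" and pp: "pairing \<alpha>1 \<gamma> > 0"
  shows "\<exists>\<gamma>'\<in>R' \<inter> pos_roots R S. \<exists>n0::int. n0 \<ge> 1 \<and> x - of_int n0 \<ge> 0 \<and>
           coroot \<gamma>' = (x - of_int n0) *\<^sub>R coroot \<alpha>1 + y *\<^sub>R coroot \<beta>1"
proof -
  have gR: "\<gamma> \<in> R'" "\<gamma> \<in> R" and aR: "\<alpha>1 \<in> R'" "\<alpha>1 \<in> R" using g a1 R'_R[OF RS BS SUB D2] by auto
  have anz: "\<alpha>1 \<noteq> 0" using rs_nz[OF RS aR(2)] .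
  obtain n0 where n0: "pairing \<alpha>1 \<gamma> = of_int n0" using rs_int[OF RS gR(2) aR(2)] by (metis Ints_cases)
  have n01: "n0 \<ge> 1" using pp n0 by simp
  define \<gamma>' where "\<gamma>' = refl \<alpha>1 \<gamma>"
  have g'R: "\<gamma>' \<in> R'" using R'_refl[OF RS BS SUB D2 aR(1) gR(1)] by (simp add: \<gamma>'_def)
  have "coroot \<gamma>' = refl \<alpha>1 (coroot \<gamma>)" unfolding \<gamma>'_def by (rule ortho_coroot[OF ortho_refl[OF anz]])
  also have "\<dots> = coroot \<gamma> - (coroot \<gamma> \<bullet> \<alpha>1) *\<^sub>R coroot \<alpha>1" by (rule coroot_refl_formula[OF anz])
  also have "coroot \<gamma> \<bullet> \<alpha>1 = of_int n0" using n0 by (simp add: pairing_def inner_commute)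
  finally have c': "coroot \<gamma>' = (x - of_int n0) *\<^sub>R coroot \<alpha>1 + y *\<^sub>R coroot \<beta>1"
    using xy(3) by (simp add: algebra_simps)
  have pos: "\<gamma>' \<in> R' \<inter> pos_roots R S"
  proof (rule ccontr)
    assume np: "\<gamma>' \<notin> R' \<inter> pos_roots R S"
    then have "- \<gamma>' \<in> R' \<inter> pos_roots R S" using R'_sign[OF RS BS SUB D2 g'R] by blast
    then obtain x'' y'' where "x'' \<ge> 0" "y'' \<ge> 0" "coroot (- \<gamma>') = x'' *\<^sub>R coroot \<alpha>1 + y'' *\<^sub>R coroot \<beta>1"
      using cone by blast
    then have "(- x'') *\<^sub>R coroot \<alpha>1 + (- y'') *\<^sub>R coroot \<beta>1 = (x - of_int n0) *\<^sub>R coroot \<alpha>1 + y *\<^sub>R coroot \<beta>1"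
      "y'' \<ge> 0" using c' by (auto simp: algebra_simps)
    then have "y = 0" using indep2_unique[OF ind] xy(2) by fastforce
    then have "coroot \<gamma> = x *\<^sub>R coroot \<alpha>1" using xy(3) by simp
    then have "\<gamma> = \<alpha>1 \<or> \<gamma> = - \<alpha>1" by (rule rs_parallel[OF RS aR(2) gR(2)])
    moreover have "\<gamma> \<noteq> - \<alpha>1" using pos_not_neg[OF RS BS] a1 g by auto
    ultimately show False using ne by simp
  qed
  then obtain x' y' where x'y': "x' \<ge> 0" "y' \<ge> 0" "coroot \<gamma>' = x' *\<^sub>R coroot \<alpha>1 + y' *\<^sub>R coroot \<beta>1"
    using cone by blast
  have "x' = x - of_int n0" using indep2_unique[OF ind] c' x'y'(3) by metis
  then show ?thesis using pos n01 c' x'y'(1) by blast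
qed

lemma descent:
  assumes a1: "\<alpha>1 \<in> R' \<inter> pos_roots R S" and b1: "\<beta>1 \<in> R' \<inter> pos_roots R S"
    and ind: "indep2 (coroot \<alpha>1) (coroot \<beta>1)"
    and cone: "\<forall>\<gamma>\<in>R' \<inter> pos_roots R S. \<exists>x y. x \<ge> 0 \<and> y \<ge> 0 \<and> coroot \<gamma> = x *\<^sub>R coroot \<alpha>1 + y *\<^sub>R coroot \<beta>1"
  shows "\<gamma> \<in> R' \<inter> pos_roots R S \<Longrightarrow> x \<ge> 0 \<Longrightarrow> y \<ge> 0 \<Longrightarrow> coroot \<gamma> = x *\<^sub>R coroot \<alpha>1 + y *\<^sub>R coroot \<beta>1
     \<Longrightarrow> x + y \<le> of_nat n \<Longrightarrow> x \<in> \<int> \<and> y \<in> \<int>"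
proof (induction n arbitrary: \<gamma> x y)
  case 0
  then have xy0: "x = 0" "y = 0" by auto
  have "coroot \<gamma> = 0" using 0(4) xy0 by simp
  moreover have "\<gamma> \<noteq> 0" using 0 R'_nz[OF RS BS SUB D2] by auto
  ultimately show ?case by (simp add: coroot_def)
next
  case (Suc n)
  have ind': "indep2 (coroot \<beta>1) (coroot \<alpha>1)" by (rule indep2_swap[OF ind])
  have cone': "\<forall>\<gamma>\<in>R' \<inter> pos_roots R S. \<exists>x y. x \<ge> 0 \<and> y \<ge> 0 \<and> coroot \<gamma> = x *\<^sub>R coroot \<beta>1 + y *\<^sub>R coroot \<alpha>1"
    using cone by (metis add.commute)
  have gR: "\<gamma> \<in> R" using Suc.prems(1) R'_R[OF RS BS SUB D2] by auto
  have aR: "\<alpha>1 \<in> R" "\<beta>1 \<in> R" using a1 b1 R'_R[OF RS BS SUB D2] by auto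
  have gnz: "\<gamma> \<noteq> 0" "\<alpha>1 \<noteq> 0" "\<beta>1 \<noteq> 0" using rs_nz[OF RS] gR aR by auto
  show ?case
  proof (cases "\<gamma> = \<alpha>1 \<or> \<gamma> = \<beta>1")
    case True
    then show ?thesis
    proof
      assume e: "\<gamma> = \<alpha>1"
      have "x *\<^sub>R coroot \<alpha>1 + y *\<^sub>R coroot \<beta>1 = 1 *\<^sub>R coroot \<alpha>1 + 0 *\<^sub>R coroot \<beta>1" using Suc.prems(4) e by simp
      then show ?thesis using indep2_unique[OF ind] by fastforce
    next
      assume e: "\<gamma> = \<beta>1"
      have "x *\<^sub>R coroot \<alpha>1 + y *\<^sub>R coroot \<beta>1 = 0 *\<^sub>R coroot \<alpha>1 + 1 *\<^sub>R coroot \<beta>1" using Suc.prems(4) e by simp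
      then show ?thesis using indep2_unique[OF ind] by fastforce
    qed
  next
    case False
    have "2 = \<gamma> \<bullet> coroot \<gamma>" using gnz by (simp add: coroot_inner)
    also have "\<dots> = x * pairing \<gamma> \<alpha>1 + y * pairing \<gamma> \<beta>1"
      using Suc.prems(4) by (simp add: pairing_def inner_add_right)
    finally have two: "x * pairing \<gamma> \<alpha>1 + y * pairing \<gamma> \<beta>1 = 2" by simp
    then have "x * pairing \<gamma> \<alpha>1 > 0 \<or> y * pairing \<gamma> \<beta>1 > 0" by linarith
    then show ?thesis
    proof
      assume h: "x * pairing \<gamma> \<alpha>1 > 0"
      then have "pairing \<gamma> \<alpha>1 > 0" using Suc.prems(2) by (simp add: zero_less_mult_iff)
      then have pp: "pairing \<alpha>1 \<gamma> > 0" using pairing_sign gnz by blast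
      obtain \<gamma>' n0 where g': "\<gamma>' \<in> R' \<inter> pos_roots R S" "(n0::int) \<ge> 1" "x - of_int n0 \<ge> 0"
        "coroot \<gamma>' = (x - of_int n0) *\<^sub>R coroot \<alpha>1 + y *\<^sub>R coroot \<beta>1"
        using descent_step[OF a1 b1 ind cone Suc.prems(1-4) _ pp] False by blast
      have "(x - of_int n0) + y \<le> of_nat n" using Suc.prems(5) g'(2) by simp
      then have "x - of_int n0 \<in> \<int> \<and> y \<in> \<int>" using Suc.IH[OF g'(1) g'(3) Suc.prems(3) g'(4)] by blast
      then show ?thesis by (metis Ints_add Ints_of_int diff_add_cancel)
    next
      assume h: "y * pairing \<gamma> \<beta>1 > 0"
      then have "pairing \<gamma> \<beta>1 > 0" using Suc.prems(3) by (simp add: zero_less_mult_iff)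
      then have pp: "pairing \<beta>1 \<gamma> > 0" using pairing_sign gnz by blast
      have c': "coroot \<gamma> = y *\<^sub>R coroot \<beta>1 + x *\<^sub>R coroot \<alpha>1" using Suc.prems(4) by (simp add: add.commute)
      obtain \<gamma>' n0 where g': "\<gamma>' \<in> R' \<inter> pos_roots R S" "(n0::int) \<ge> 1" "y - of_int n0 \<ge> 0"
        "coroot \<gamma>' = (y - of_int n0) *\<^sub>R coroot \<beta>1 + x *\<^sub>R coroot \<alpha>1"
        using descent_step[OF b1 a1 ind' cone' Suc.prems(1) Suc.prems(3) Suc.prems(2) c' _ pp] False by blast
      have c'': "coroot \<gamma>' = x *\<^sub>R coroot \<alpha>1 + (y - of_int n0) *\<^sub>R coroot \<beta>1" using g'(4) by (simp add: add.commute)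
      have "x + (y - of_int n0) \<le> of_nat n" using Suc.prems(5) g'(2) by simp
      then have "x \<in> \<int> \<and> y - of_int n0 \<in> \<int>" using Suc.IH[OF g'(1) Suc.prems(2) g'(3) c''] by blast
      then show ?thesis by (metis Ints_add Ints_of_int diff_add_cancel)
    qed
  qed
qed

lemma R'_int_base:
  "\<exists>\<alpha>1 \<beta>1. \<alpha>1 \<in> R' \<inter> pos_roots R S \<and> \<beta>1 \<in> R' \<inter> pos_roots R S \<and> indep2 (coroot \<alpha>1) (coroot \<beta>1) \<and>
     (\<forall>\<gamma>\<in>R' \<inter> pos_roots R S. \<exists>a b::int. a \<ge> 0 \<and> b \<ge> 0 \<and> coroot \<gamma> = of_int a *\<^sub>R coroot \<alpha>1 + of_int b *\<^sub>R coroot \<beta>1)"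
proof -
  obtain \<alpha>1 \<beta>1 where a1: "\<alpha>1 \<in> R' \<inter> pos_roots R S" and b1: "\<beta>1 \<in> R' \<inter> pos_roots R S"
    and ind: "indep2 (coroot \<alpha>1) (coroot \<beta>1)"
    and cone: "\<forall>\<gamma>\<in>R' \<inter> pos_roots R S. \<exists>x y. x \<ge> 0 \<and> y \<ge> 0 \<and> coroot \<gamma> = x *\<^sub>R coroot \<alpha>1 + y *\<^sub>R coroot \<beta>1"
    using R'_cone[OF RS BS SUB D2] by blast
  have "\<exists>a b::int. a \<ge> 0 \<and> b \<ge> 0 \<and> coroot \<gamma> = of_int a *\<^sub>R coroot \<alpha>1 + of_int b *\<^sub>R coroot \<beta>1"
    if g: "\<gamma> \<in> R' \<inter> pos_roots R S" for \<gamma>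
  proof -
    obtain x y where xy: "x \<ge> 0" "y \<ge> 0" "coroot \<gamma> = x *\<^sub>R coroot \<alpha>1 + y *\<^sub>R coroot \<beta>1" using cone g by blast
    have "x + y \<le> of_nat (nat (ceiling (x + y)))" by linarith
    then have "x \<in> \<int> \<and> y \<in> \<int>" using descent[OF a1 b1 ind cone g xy] by blast
    then obtain a b where "x = of_int a" "y = of_int b" by (metis Ints_cases)
    then show ?thesis using xy by auto
  qed
  then show ?thesis using a1 b1 ind by blast
qed

end


lemma foldl_fix: "(\<forall>j\<in>set js. g j P = P) \<Longrightarrow> foldl (\<lambda>acc j. acc \<circ> g j) id js P = P"
  by (induction js rule: rev_induct) auto

lemma prodJ_fix: "finite J \<Longrightarrow> (\<forall>j\<in>J. g j P = P) \<Longrightarrow> prodJ g J P = P"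
  unfolding prodJ_def by (rule foldl_fix) simp

lemma foldl_preserve: "(\<forall>j\<in>set js. \<forall>x\<in>X. g j x \<in> X) \<Longrightarrow> x \<in> X \<Longrightarrow> foldl (\<lambda>acc j. acc \<circ> g j) id js x \<in> X"
proof (induction js arbitrary: x rule: rev_induct)
  case Nil then show ?case by simp
next
  case (snoc y js) then show ?case by simp
qed

lemma prodJ_preserve: "finite J \<Longrightarrow> (\<forall>j\<in>J. \<forall>x\<in>X. g j x \<in> X) \<Longrightarrow> x \<in> X \<Longrightarrow> prodJ g J x \<in> X"
  unfolding prodJ_def by (rule foldl_preserve) simp_all

lemma strict_cs:
  fixes A B :: "'a::euclidean_space"
  assumes "indep2 A B"
  shows "(A \<bullet> A) * (B \<bullet> B) - (A \<bullet> B) * (A \<bullet> B) > 0"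
proof -
  have An: "A \<noteq> 0"
  proof
    assume "A = 0" then have "1 *\<^sub>R A + 0 *\<^sub>R B = 0" by simp
    then show False using assms unfolding indep2_def by fastforce
  qed
  then have G: "A \<bullet> A > 0" by simp
  define w where "w = B - ((A \<bullet> B) / (A \<bullet> A)) *\<^sub>R A"
  have wn: "w \<noteq> 0"
  proof
    assume "w = 0"
    then have "(- ((A \<bullet> B) / (A \<bullet> A))) *\<^sub>R A + 1 *\<^sub>R B = 0" by (simp add: w_def)
    then show False using assms unfolding indep2_def by fastforce
  qed
  have "w \<bullet> w = B \<bullet> B - (A \<bullet> B) * (A \<bullet> B) / (A \<bullet> A)"
    using G by (simp add: w_def inner_diff_left inner_diff_right inner_commute algebra_simps power2_eq_square)
  moreover have "w \<bullet> w > 0" using wn by simp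
  ultimately have "B \<bullet> B - (A \<bullet> B) * (A \<bullet> B) / (A \<bullet> A) > 0" by simp
  then have "(A \<bullet> A) * (B \<bullet> B - (A \<bullet> B) * (A \<bullet> B) / (A \<bullet> A)) > 0" using G by simp
  then show ?thesis using G by (simp add: algebra_simps)
qed

lemma solve2:
  fixes A B :: "'a::euclidean_space"
  assumes "indep2 A B"
  shows "\<exists>P. P \<bullet> A = c1 \<and> P \<bullet> B = c2"
proof -
  define G where "G = A \<bullet> A"
  define H where "H = A \<bullet> B"
  define K where "K = B \<bullet> B"
  define d where "d = G * K - H * H"
  have dp: "d > 0" using strict_cs[OF assms] by (simp add: d_def G_def H_def K_def)
  define P where "P = ((c1 * K - c2 * H) / d) *\<^sub>R A + ((c2 * G - c1 * H) / d) *\<^sub>R B"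
  have BA: "B \<bullet> A = H" by (simp add: H_def inner_commute)
  have "P \<bullet> A = ((c1 * K - c2 * H) / d) * G + ((c2 * G - c1 * H) / d) * H"
    by (simp add: P_def inner_add_left BA G_def)
  also have "\<dots> = ((c1 * K - c2 * H) * G + (c2 * G - c1 * H) * H) / d" by (simp add: add_divide_distrib)
  also have "\<dots> = c1" using dp by (simp add: d_def field_simps)
  finally have 1: "P \<bullet> A = c1" .
  have "P \<bullet> B = ((c1 * K - c2 * H) / d) * H + ((c2 * G - c1 * H) / d) * K"
    by (simp add: P_def inner_add_left K_def H_def)
  also have "\<dots> = ((c1 * K - c2 * H) * H + (c2 * G - c1 * H) * K) / d" by (simp add: add_divide_distrib)
  also have "\<dots> = c2" using dp by (simp add: d_def field_simps)
  finally have 2: "P \<bullet> B = c2" .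
  show ?thesis using 1 2 by blast
qed


theorem lemma4p4:
  fixes R S :: "'a::euclidean_space set" and lam a :: 'a and \<Gamma> :: "'a list"
    and t q k :: nat and J :: "nat set"
  assumes "root_system R" and "irreducible_rs R" and "is_base R S"
    and "dominant R S lam" and "lambda_chain R S lam \<Gamma>"
    and "t + q \<le> length \<Gamma>"
    and "\<exists>R'. root_subsystem R R' \<and> dim R' = 2 \<and> distinct (take q (drop t \<Gamma>)) \<and>
               set (take q (drop t \<Gamma>)) = R' \<inter> pos_roots R S"
    and "admissible R S \<Gamma> J"
    and "a \<in> insert (- highest_root R S) S"
    and "k < q"
    and "prodJ (r_at \<Gamma>) (J \<inter> {..<t}) (\<Gamma> ! (t + k)) = a \<or>
         prodJ (r_at \<Gamma>) (J \<inter> {..<t}) (\<Gamma> ! (t + k)) = - a"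
  shows "let u = prodJ (r_at \<Gamma>) (J \<inter> {..<t});
             w = prodJ (r_at \<Gamma>) (J \<inter> {..<t + q});
             uhat = prodJ (rhat_at \<Gamma>) (J \<inter> {..<t});
             m = (THE m. uhat ` hyp (\<Gamma> ! (t + k)) (- real (lcount \<Gamma> (t + k)))
                         = hyp (u (\<Gamma> ! (t + k))) m);
             c = sgn_root R S (inv u a) * m;
             posside = {\<nu>. pairing \<nu> a > c}
         in (inv u a \<in> pos_roots R S \<longleftrightarrow> galleryJ R S \<Gamma> J t \<subseteq> posside) \<and>
            (- inv w a \<in> pos_roots R S \<longleftrightarrow> galleryJ R S \<Gamma> J (t + q) \<subseteq> posside)"
proof -
  obtain R' where SUB: "root_subsystem R R'" and D2: "dim R' = 2" and DI: "distinct (take q (drop t \<Gamma>))"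
    and BL: "set (take q (drop t \<Gamma>)) = R' \<inter> pos_roots R S" using assms(7) by blast
  note RS = assms(1) and BS = assms(3) and DOM = assms(4) and LC = assms(5) and tq = assms(6)
    and ADM = assms(8) and kq = assms(10) and UB = assms(11)
  let ?P = "R' \<inter> pos_roots R S"
  let ?f = "chain_alcoves R S \<Gamma>"
  define blk where "blk = take q (drop t \<Gamma>)"
  have blk_nth: "blk ! i = \<Gamma> ! (t + i)" if "i < q" for i using tq that by (simp add: blk_def)
  have blk_len: "length blk = q" using tq by (simp add: blk_def)
  have DIb: "distinct blk" using DI by (simp add: blk_def)
  have BLb: "set blk = ?P" using BL by (simp add: blk_def)
  have L0: "0 < length \<Gamma>" using kq tq by linarith
  have GR: "\<Gamma> ! j \<in> R" if "j < length \<Gamma>" for j using chain_edge[OF RS LC DOM that] by blast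
  have Jsub: "J \<subseteq> {..<length \<Gamma>}" using ADM by (simp add: admissible_def)
  have Jfin: "finite J" using Jsub finite_subset by blast
  have Jnz: "\<forall>j\<in>J'. \<Gamma> ! j \<noteq> 0" if "J' \<subseteq> J" for J' using that Jsub GR rs_nz[OF RS] by blast
  have R'R: "R' \<subseteq> R" by (rule R'_R[OF RS BS SUB D2])
  define cnt where "cnt \<gamma> = card {j. j < t \<and> \<Gamma> ! j = \<gamma>}" for \<gamma>
  have blkP: "\<Gamma> ! (t + i) \<in> ?P" if "i < q" for i
  proof -
    have "blk ! i \<in> set blk" using that blk_len by simp
    then show ?thesis using blk_nth[OF that] BLb by simp
  qed
  have cnt_lt: "{j. j < t + i \<and> \<Gamma> ! j = \<Gamma> ! (t + i)} = {j. j < t \<and> \<Gamma> ! j = \<Gamma> ! (t + i)}" if iq: "i < q" for i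
  proof -
    have "\<Gamma> ! j \<noteq> \<Gamma> ! (t + i)" if "t \<le> j" "j < t + i" for j
    proof
      assume e: "\<Gamma> ! j = \<Gamma> ! (t + i)"
      have "blk ! (j - t) = blk ! i" using e blk_nth[of "j - t"] blk_nth[OF iq] that iq by simp
      moreover have "j - t < length blk" "i < length blk" using that iq blk_len by auto
      ultimately have "j - t = i" using nth_eq_iff_index_eq[OF DIb] by blast
      then show False using that by simp
    qed
    note ne = this
    show ?thesis
    proof (rule set_eqI)
      fix j show "j \<in> {j. j < t + i \<and> \<Gamma> ! j = \<Gamma> ! (t + i)} \<longleftrightarrow> j \<in> {j. j < t \<and> \<Gamma> ! j = \<Gamma> ! (t + i)}"
        using ne[of j] by (cases "t \<le> j") auto
    qed
  qed
  have cnt_q: "{j. j < t + q \<and> \<Gamma> ! j = \<Gamma> ! (t + i)} = insert (t + i) {j. j < t \<and> \<Gamma> ! j = \<Gamma> ! (t + i)}" if iq: "i < q" for i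
  proof -
    have "\<Gamma> ! j \<noteq> \<Gamma> ! (t + i)" if "t \<le> j" "j < t + q" "j \<noteq> t + i" for j
    proof
      assume e: "\<Gamma> ! j = \<Gamma> ! (t + i)"
      have jq: "j - t < q" using that by simp
      have "blk ! (j - t) = blk ! i" using e blk_nth[OF jq] blk_nth[OF iq] that by simp
      moreover have "j - t < length blk" "i < length blk" using jq iq blk_len by auto
      ultimately have "j - t = i" using nth_eq_iff_index_eq[OF DIb] by blast
      then show False using that by simp
    qed
    note ne = this
    show ?thesis
    proof (rule set_eqI)
      fix j show "j \<in> {j. j < t + q \<and> \<Gamma> ! j = \<Gamma> ! (t + i)} \<longleftrightarrow> j \<in> insert (t + i) {j. j < t \<and> \<Gamma> ! j = \<Gamma> ! (t + i)}"
        using ne[of j] iq by (cases "t \<le> j") auto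
    qed
  qed
  have lc: "lcount \<Gamma> (t + i) = cnt (\<Gamma> ! (t + i))" if "i < q" for i
    using cnt_lt[OF that] by (simp add: lcount_def cnt_def)
  have Pex: "\<exists>i<q. \<Gamma> ! (t + i) = \<gamma>" if "\<gamma> \<in> ?P" for \<gamma>
  proof -
    have "\<gamma> \<in> set blk" using that BLb by simp
    then obtain i where "i < length blk" "blk ! i = \<gamma>" by (auto simp: in_set_conv_nth)
    then show ?thesis using blk_nth blk_len by auto
  qed
  have idx_t: "idx (?f t) \<gamma> = - int (cnt \<gamma>)" if "\<gamma> \<in> ?P" for \<gamma>
    using chain_monotone[OF RS LC DOM L0, of \<gamma> t] that tq by (simp add: cnt_def)
  have idx_tq: "idx (?f (t + q)) \<gamma> = - int (cnt \<gamma>) - 1" if g: "\<gamma> \<in> ?P" for \<gamma>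
  proof -
    obtain i where i: "i < q" "\<Gamma> ! (t + i) = \<gamma>" using Pex[OF g] by blast
    have "card {j. j < t + q \<and> \<Gamma> ! j = \<gamma>} = Suc (cnt \<gamma>)"
      using cnt_q[OF i(1)] i(2) by (simp add: cnt_def)
    then show ?thesis using chain_monotone[OF RS LC DOM L0, of \<gamma> "t + q"] g tq by simp
  qed
  have alc: "is_alcove R (?f n)" if "n \<le> length \<Gamma>" for n by (rule chain_alcove[OF RS LC DOM that L0])
  have gP_R: "\<gamma> \<in> R" if "\<gamma> \<in> ?P" for \<gamma> using that R'R by blast
  have strip_t: "- real (cnt \<gamma>) < pairing x \<gamma> \<and> pairing x \<gamma> < - real (cnt \<gamma>) + 1" if "\<gamma> \<in> ?P" "x \<in> ?f t" for \<gamma> x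
    using idx_bounds[OF RS alc[of t] that(2) gP_R[OF that(1)]] idx_t[OF that(1)] tq by simp
  have strip_tq: "- real (cnt \<gamma>) - 1 < pairing x \<gamma> \<and> pairing x \<gamma> < - real (cnt \<gamma>)" if "\<gamma> \<in> ?P" "x \<in> ?f (t + q)" for \<gamma> x
    using idx_bounds[OF RS alc[of "t + q"] that(2) gP_R[OF that(1)]] idx_tq[OF that(1)] tq by simp
  obtain x0 where x0: "x0 \<in> ?f t" using alcove_ne[OF RS alc[of t]] tq by auto
  obtain y0 where y0: "y0 \<in> ?f (t + q)" using alcove_ne[OF RS alc[of "t + q"]] tq by auto
  define \<beta> where "\<beta> = \<Gamma> ! (t + k)"
  have bP: "\<beta> \<in> ?P" using blkP[OF kq] by (simp add: \<beta>_def)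
  have bpos: "\<beta> \<in> pos_roots R S" and bR: "\<beta> \<in> R" using bP R'R by auto
  have bnz: "\<beta> \<noteq> 0" using rs_nz[OF RS bR] .
  have lk: "lcount \<Gamma> (t + k) = cnt \<beta>" using lc[OF kq] by (simp add: \<beta>_def)
  define u where "u = prodJ (r_at \<Gamma>) (J \<inter> {..<t})"
  define uh where "uh = prodJ (rhat_at \<Gamma>) (J \<inter> {..<t})"
  have uaff: "ortho u \<and> (\<forall>x. uh x = u x + uh 0)"
    unfolding u_def uh_def by (rule prodJ_affine) (use Jnz Jfin in auto)
  have uo: "ortho u" using uaff by (rule conjunct1)
  have uF: "\<And>x. uh x = u x + uh 0" using uaff[THEN conjunct2] by (rule spec)
  define b where "b = uh 0"
  have uF': "\<And>x. uh x = u x + b" unfolding b_def by (rule uF)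
  define m where "m = - real (cnt \<beta>) + pairing b (u \<beta>)"
  have ubnz: "u \<beta> \<noteq> 0"
  proof
    assume "u \<beta> = 0" then have "u \<beta> = u 0" using ortho_zero[OF uo] by simp
    then have "\<beta> = 0" using injD[OF ortho_inj[OF uo]] by blast
    then show False using bnz by simp
  qed
  have mdef: "(THE m. uh ` hyp (\<Gamma> ! (t + k)) (- real (lcount \<Gamma> (t + k))) = hyp (u (\<Gamma> ! (t + k))) m) = m"
  proof (rule the_equality)
    show "uh ` hyp (\<Gamma> ! (t + k)) (- real (lcount \<Gamma> (t + k))) = hyp (u (\<Gamma> ! (t + k))) m"
      using aff_hyp_image[OF uo uF', of \<beta> "- real (cnt \<beta>)"] lk by (simp add: \<beta>_def m_def)
    fix m' assume "uh ` hyp (\<Gamma> ! (t + k)) (- real (lcount \<Gamma> (t + k))) = hyp (u (\<Gamma> ! (t + k))) m'"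
    then have "hyp (u \<beta>) m' = hyp (u \<beta>) m"
      using aff_hyp_image[OF uo uF', of \<beta> "- real (cnt \<beta>)"] lk by (simp add: \<beta>_def m_def)
    then show "m' = m" by (rule hyp_eq_level[OF ubnz])
  qed
  have pux: "pairing (uh x) (u \<beta>) = pairing x \<beta> + pairing b (u \<beta>)" for x by (rule aff_pairing[OF uo uF'])
  define v where "v = prodJ (r_at \<Gamma>) (J \<inter> {t..<t + q})"
  define fh where "fh = prodJ (rhat_at \<Gamma>) (J \<inter> {t..<t + q})"
  have vaff: "ortho v \<and> (\<forall>x. fh x = v x + fh 0)"
    unfolding v_def fh_def by (rule prodJ_affine) (use Jnz Jfin in auto)
  have vo: "ortho v" using vaff by (rule conjunct1)
  have vF: "\<And>x. fh x = v x + fh 0" using vaff[THEN conjunct2] by (rule spec)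
  have wsplit: "prodJ (r_at \<Gamma>) (J \<inter> {..<t + q}) = u \<circ> v" "prodJ (rhat_at \<Gamma>) (J \<inter> {..<t + q}) = uh \<circ> fh"
    using prodJ_split[OF Jfin, of t "t + q"] by (auto simp: u_def v_def uh_def fh_def)
  obtain P where PP: "\<forall>\<gamma>\<in>?P. pairing P \<gamma> = - real (cnt \<gamma>)"
  proof -
    obtain \<alpha>1 \<beta>1 where a1: "\<alpha>1 \<in> ?P" and b1: "\<beta>1 \<in> ?P" and ind: "indep2 (coroot \<alpha>1) (coroot \<beta>1)"
      and ib: "\<forall>\<gamma>\<in>?P. \<exists>a b::int. a \<ge> 0 \<and> b \<ge> 0 \<and> coroot \<gamma> = of_int a *\<^sub>R coroot \<alpha>1 + of_int b *\<^sub>R coroot \<beta>1"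
      using R'_int_base[OF RS BS SUB D2] by blast
    obtain P where P1: "P \<bullet> coroot \<alpha>1 = - real (cnt \<alpha>1)" and P2: "P \<bullet> coroot \<beta>1 = - real (cnt \<beta>1)"
      using solve2[OF ind] by blast
    have "pairing P \<gamma> = - real (cnt \<gamma>)" if g: "\<gamma> \<in> ?P" for \<gamma>
    proof -
      obtain a b :: int where ab: "a \<ge> 0" "b \<ge> 0" "coroot \<gamma> = of_int a *\<^sub>R coroot \<alpha>1 + of_int b *\<^sub>R coroot \<beta>1"
        using ib g by blast
      have lin: "pairing z \<gamma> = of_int a * pairing z \<alpha>1 + of_int b * pairing z \<beta>1" for z
        using ab(3) by (simp add: pairing_def inner_add_right)
      define M where "M = a * (- int (cnt \<alpha>1)) + b * (- int (cnt \<beta>1)) + int (cnt \<gamma>)"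
      have Pg: "pairing P \<gamma> = of_int M - real (cnt \<gamma>)" using lin[of P] P1 P2 by (simp add: pairing_def M_def)
      have ar: "real_of_int a \<ge> 0" "real_of_int b \<ge> 0" using ab by auto
      have x1: "of_int a * pairing x0 \<alpha>1 \<ge> of_int a * (- real (cnt \<alpha>1))"
        using mult_left_mono[OF less_imp_le[OF conjunct1[OF strip_t[OF a1 x0]]] ar(1)] .
      have x2: "of_int b * pairing x0 \<beta>1 \<ge> of_int b * (- real (cnt \<beta>1))"
        using mult_left_mono[OF less_imp_le[OF conjunct1[OF strip_t[OF b1 x0]]] ar(2)] .
      have y1: "of_int a * pairing y0 \<alpha>1 \<le> of_int a * (- real (cnt \<alpha>1))"
        using mult_left_mono[OF less_imp_le[OF conjunct2[OF strip_tq[OF a1 y0]]] ar(1)] .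
      have y2: "of_int b * pairing y0 \<beta>1 \<le> of_int b * (- real (cnt \<beta>1))"
        using mult_left_mono[OF less_imp_le[OF conjunct2[OF strip_tq[OF b1 y0]]] ar(2)] .
      have Mr: "real_of_int M = of_int a * (- real (cnt \<alpha>1)) + of_int b * (- real (cnt \<beta>1)) + real (cnt \<gamma>)"
        by (simp add: M_def)
      have "real_of_int M < 1" using lin[of x0] x1 x2 strip_t[OF g x0] Mr by linarith
      moreover have "real_of_int M > -1" using lin[of y0] y1 y2 strip_tq[OF g y0] Mr by linarith
      ultimately have "M = 0" by linarith
      then show ?thesis using Pg by simp
    qed
    then show ?thesis using that by blast
  qed
  have fixP: "fh P = P"
    unfolding fh_def
  proof (rule prodJ_fix)
    show "finite (J \<inter> {t..<t + q})" using Jfin by simp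
    show "\<forall>j\<in>J \<inter> {t..<t + q}. rhat_at \<Gamma> j P = P"
    proof
      fix j assume j: "j \<in> J \<inter> {t..<t + q}"
      define i where "i = j - t"
      have iq: "i < q" and ji: "j = t + i" using j by (auto simp: i_def)
      have "pairing P (\<Gamma> ! j) = - real (lcount \<Gamma> j)" using PP blkP[OF iq] lc[OF iq] ji by simp
      then show "rhat_at \<Gamma> j P = P" unfolding rhat_at_def by (rule aff_refl_fix)
    qed
  qed
  have fhP: "fh x - P = v (x - P)" for x
  proof -
    have "fh P = v P + fh 0" by (rule vF)
    then have "P = v P + fh 0" using fixP by simp
    then have "fh 0 = P - v P" by (simp add: algebra_simps)
    then show ?thesis using vF[of x] ortho_diff[OF vo, of x P] by simp
  qed
  have finR': "finite R'" using rs_finite[OF RS] R'R finite_subset by blast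
  have vR': "v x \<in> R'" if "x \<in> R'" for x
    unfolding v_def
  proof (rule prodJ_preserve[OF _ _ that])
    show "finite (J \<inter> {t..<t + q})" using Jfin by simp
    show "\<forall>j\<in>J \<inter> {t..<t + q}. \<forall>x\<in>R'. r_at \<Gamma> j x \<in> R'"
    proof (intro ballI)
      fix j x assume j: "j \<in> J \<inter> {t..<t + q}" and x: "x \<in> R'"
      have iq: "j - t < q" and ji: "j = t + (j - t)" using j by auto
      have "\<Gamma> ! j \<in> R'" using blkP[OF iq] ji by simp
      then show "r_at \<Gamma> j x \<in> R'" unfolding r_at_def by (rule R'_refl[OF RS BS SUB D2 _ x])
    qed
  qed
  have vsurj: "v ` R' = R'"
    by (rule endo_inj_surj[OF finR']) (use vR' ortho_inj[OF vo] in \<open>auto simp: inj_on_def inj_def\<close>)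
  obtain \<delta> where dR': "\<delta> \<in> R'" and vd: "v \<delta> = \<beta>"
  proof -
    have "\<beta> \<in> v ` R'" using vsurj bP by simp
    then show ?thesis using that by blast
  qed
  have key2: "pairing (fh y) \<beta> + real (cnt \<beta>) = pairing (y - P) \<delta>" for y
  proof -
    have "pairing (fh y) \<beta> + real (cnt \<beta>) = pairing (fh y - P) \<beta>" using PP bP by (simp add: pairing_diff1)
    also have "\<dots> = pairing (v (y - P)) (v \<delta>)" using fhP vd by simp
    also have "\<dots> = pairing (y - P) \<delta>" by (rule ortho_pairing[OF vo])
    finally show ?thesis .
  qed
  have dsign: "\<delta> \<in> ?P \<or> - \<delta> \<in> ?P" by (rule R'_sign[OF RS BS SUB D2 dR'])
  have dexcl: "\<not> (\<delta> \<in> ?P \<and> - \<delta> \<in> ?P)" using pos_not_neg[OF RS BS, of \<delta>] by auto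
  have dneg: "pairing (y - P) \<delta> < 0" if "\<delta> \<in> ?P" "y \<in> ?f (t + q)" for y
    using strip_tq[OF that] PP that(1) by (simp add: pairing_diff1)
  have dpos: "pairing (y - P) \<delta> > 0" if "- \<delta> \<in> ?P" "y \<in> ?f (t + q)" for y
  proof -
    have "pairing P (- \<delta>) = - real (cnt (- \<delta>))" using PP that(1) by blast
    then show ?thesis using strip_tq[OF that] by (simp add: pairing_diff1)
  qed
  have gt: "galleryJ R S \<Gamma> J t = uh ` ?f t" by (simp add: galleryJ_def uh_def)
  have gtq: "galleryJ R S \<Gamma> J (t + q) = (uh \<circ> fh) ` ?f (t + q)" by (simp add: galleryJ_def wsplit(2))
  have ub: "u \<beta> = a \<or> u \<beta> = - a" using UB by (simp add: u_def \<beta>_def)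
  have injw: "inj (u \<circ> v)" using ortho_inj[OF uo] ortho_inj[OF vo] by (rule inj_compose)
  have negP: "- \<delta> \<in> pos_roots R S \<longleftrightarrow> - \<delta> \<in> ?P" using R'_neg[OF RS BS SUB D2 dR'] by auto
  have posP: "\<delta> \<in> pos_roots R S \<longleftrightarrow> \<delta> \<in> ?P" using dR' by auto
  have comp2: "pairing (fh y) \<beta> = pairing (y - P) \<delta> - real (cnt \<beta>)" for y using key2[of y] by simp
  have goal: "(inv u a \<in> pos_roots R S \<longleftrightarrow> uh ` ?f t \<subseteq> {\<nu>. sgn_root R S (inv u a) * m < pairing \<nu> a}) \<and>
      (- inv (u \<circ> v) a \<in> pos_roots R S \<longleftrightarrow> (uh \<circ> fh) ` ?f (t + q) \<subseteq> {\<nu>. sgn_root R S (inv u a) * m < pairing \<nu> a})"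
  proof (cases "u \<beta> = a")
    case True
    have iua: "inv u a = \<beta>" using inv_f_f[OF ortho_inj[OF uo], of \<beta>] True by simp
    have sg: "sgn_root R S \<beta> = 1" using bpos by (simp add: sgn_root_def)
    have iw: "inv (u \<circ> v) a = \<delta>" using inv_f_f[OF injw, of \<delta>] True vd by simp
    have pa: "pairing (uh x) a = pairing x \<beta> + pairing b (u \<beta>)" for x using pux[of x] True by simp
    have p1: "uh ` ?f t \<subseteq> {\<nu>. m < pairing \<nu> a}"
    proof
      fix \<nu> assume "\<nu> \<in> uh ` ?f t"
      then obtain x where x: "x \<in> ?f t" "\<nu> = uh x" by blast
      show "\<nu> \<in> {\<nu>. m < pairing \<nu> a}" using strip_t[OF bP x(1)] pa[of x] x(2) by (simp add: m_def)
    qed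
    have pa2: "pairing ((uh \<circ> fh) y) a = pairing (y - P) \<delta> + m" for y
      using pa[of "fh y"] comp2[of y] by (simp add: m_def)
    have p2: "(- \<delta> \<in> pos_roots R S) \<longleftrightarrow> (uh \<circ> fh) ` ?f (t + q) \<subseteq> {\<nu>. m < pairing \<nu> a}"
    proof (cases "- \<delta> \<in> ?P")
      case True
      have "(uh \<circ> fh) ` ?f (t + q) \<subseteq> {\<nu>. m < pairing \<nu> a}"
      proof
        fix \<nu> assume "\<nu> \<in> (uh \<circ> fh) ` ?f (t + q)"
        then obtain y where y: "y \<in> ?f (t + q)" "\<nu> = (uh \<circ> fh) y" by blast
        have "pairing (y - P) \<delta> > 0" by (rule dpos[OF True y(1)])
        then show "\<nu> \<in> {\<nu>. m < pairing \<nu> a}" using pa2[of y] y(2) by simp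
      qed
      then show ?thesis using negP True by blast
    next
      case False
      then have "\<delta> \<in> ?P" using dsign by blast
      then have "\<not> (m < pairing ((uh \<circ> fh) y0) a)" using dneg[OF _ y0] pa2[of y0] by simp
      then show ?thesis using negP False y0 by blast
    qed
    show ?thesis using iua sg iw p1 p2 bpos by simp
  next
    case False
    then have ua: "u \<beta> = - a" using ub by blast
    then have a_eq: "a = - u \<beta>" by simp
    have umb: "u (- \<beta>) = a" using ortho_neg[OF uo, of \<beta>] ua by simp
    have iua: "inv u a = - \<beta>" using inv_f_f[OF ortho_inj[OF uo], of "- \<beta>"] umb by simp
    have sg: "sgn_root R S (- \<beta>) = -1" using pos_not_neg[OF RS BS bpos] by (simp add: sgn_root_def)
    have wmd: "(u \<circ> v) (- \<delta>) = a" using ortho_neg[OF vo, of \<delta>] vd umb by simp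
    have iw: "inv (u \<circ> v) a = - \<delta>" using inv_f_f[OF injw, of "- \<delta>"] wmd by simp
    have pa: "pairing (uh x) a = - (pairing x \<beta> + pairing b (u \<beta>))" for x
      using pux[of x] a_eq by simp
    have p1: "\<not> uh ` ?f t \<subseteq> {\<nu>. - m < pairing \<nu> a}"
    proof
      assume "uh ` ?f t \<subseteq> {\<nu>. - m < pairing \<nu> a}"
      then have "- m < pairing (uh x0) a" using x0 by blast
      then show False using strip_t[OF bP x0] pa[of x0] by (simp add: m_def)
    qed
    have pa2: "pairing ((uh \<circ> fh) y) a = - pairing (y - P) \<delta> - m" for y
      using pa[of "fh y"] comp2[of y] by (simp add: m_def)
    have p2: "(\<delta> \<in> pos_roots R S) \<longleftrightarrow> (uh \<circ> fh) ` ?f (t + q) \<subseteq> {\<nu>. - m < pairing \<nu> a}"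
    proof (cases "\<delta> \<in> ?P")
      case True
      have "(uh \<circ> fh) ` ?f (t + q) \<subseteq> {\<nu>. - m < pairing \<nu> a}"
      proof
        fix \<nu> assume "\<nu> \<in> (uh \<circ> fh) ` ?f (t + q)"
        then obtain y where y: "y \<in> ?f (t + q)" "\<nu> = (uh \<circ> fh) y" by blast
        have "pairing (y - P) \<delta> < 0" by (rule dneg[OF True y(1)])
        then show "\<nu> \<in> {\<nu>. - m < pairing \<nu> a}" using pa2[of y] y(2) by simp
      qed
      then show ?thesis using posP True by blast
    next
      case False
      then have "- \<delta> \<in> ?P" using dsign by blast
      then have "\<not> (- m < pairing ((uh \<circ> fh) y0) a)" using dpos[OF _ y0] pa2[of y0] by simp
      then show ?thesis using posP False y0 by blast
    qed
    have np: "- \<beta> \<notin> pos_roots R S" using pos_not_neg[OF RS BS bpos] .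
    show ?thesis using iua sg iw p1 p2 np by simp
  qed
  show ?thesis
    unfolding Let_def wsplit(1) u_def[symmetric] uh_def[symmetric] mdef gt gtq by (rule goal)
qed


end
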